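(* Let $f:\mathbb{R}^n\times\mathbb{R}^N\to\mathbb{R}^n$ be continuous, let $\xi_1\in(0,1)$, $\xi_2<0$, $\varepsilon_0>0$, and consider the closed-loop system $$\dot x=f(x,u),\qquad \dot u=-\phi_\xi\big(\mathcal{G}_\theta(x,u)\big),\qquad \dot\theta=\varepsilon_0\Pi(\theta),\ \theta\in\Theta,$$ with $x\in\mathbb{R}^n$, $u\in\mathbb{R}^N$, $\theta\in\mathbb{R}^m$. Assume: (A1) there exist a $\mathcal{C}^1$, $\ell$-Lipschitz map $h:\mathbb{R}^N\to\mathbb{R}^n$ and constants $\gamma,\ell>0$ such that $f(h(u),u)=0$ for all $u\in\mathbb{R}^N$, and there exist $a>0$, $p\in(0,1)$, $q>1$ such that for all $x\in\mathbb{R}^n$ and $u,\hat u\in\mathbb{R}^N$: if $|x-h(\hat u)|\ge\gamma|u-\hat u|$ then $(x-h(\hat u))^\top f(x,u)\le-\frac a2|x-h(\hat u)|^{2p}-\frac a2|x-h(\hat u)|^{2q}$; (A2) $\Pi:\mathbb{R}^m\to\mathbb{R}^m$ is Lipschitz continuous and $\Theta\subset\mathbb{R}^m$ is compact and forward invariant under $\dot\theta=\varepsilon_0\Pi(\theta)$; (A3) the map $u\mapsto\Phi_\theta(u):=\phi_\theta(h(u),u)$ is $\mathcal{C}^1$, $L$-smooth and $\mu$-strongly convex uniformly in $\theta$, i.e. there exist $L,\mu>0$ with $|\nabla\Phi_\theta(\hat u)-\nabla\Phi_\theta(u)|\le L|\hat u-u|$ and $\Phi_\theta(\hat u)\ge\Phi_\theta(u)+\nabla\Phi_\theta(u)^\top(\hat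 u-u)+\frac\mu2|\hat u-u|^2$ for all $u,\hat u\in\mathbb{R}^N$ and all $\theta$; and there exists a $\mathcal{C}^1$ map $\varphi:\mathbb{R}^m\to\mathbb{R}^N$ with $\varphi(\theta)=\arg\min_u\Phi_\theta(u)$; (A4) there exists $K>0$ with $|\mathcal{G}_\theta(\hat x,u)-\mathcal{G}_\theta(x,u)|\le K|\hat x-x|$ for all $x,\hat x\in\mathbb{R}^n$, $u\in\mathbb{R}^N$, $\theta\in\mathbb{R}^m$. If moreover $\mu>K(\ell+\gamma)$, then there exist $\beta\in\mathcal{KL}_{\mathrm{FxT}}$ and $\varrho\in\mathcal{K}$ such that for each $x(0)\in\mathbb{R}^n$, $u(0)\in\mathbb{R}^N$, $\theta(0)\in\Theta$, every solution satisfies, for all $t\ge0$, $$\left|\begin{bmatrix}x(t)-h(\varphi(\theta(t)))\\ u(t)-\varphi(\theta(t))\end{bmatrix}\right|\le\beta\left(\left|\begin{bmatrix}x(0)-h(\varphi(\theta(0)))\\ u(0)-\varphi(\theta(0))\end{bmatrix}\right|,t\right)+\varrho\Big(\sup_{s\ge0}|\varepsilon_0\Pi(\theta(s))|\Big).$$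
   Context: $\phi_\theta:\mathbb{R}^n\times\mathbb{R}^N\to\mathbb{R}$ is a $\mathcal{C}^1$ cost function depending on a parameter $\theta\in\mathbb{R}^m$, and $\nabla\phi_\theta(x,u)\in\mathbb{R}^{n+N}$ is its gradient in $(x,u)$. $\mathcal{G}_\theta(x,u):=H(u)^\top\nabla\phi_\theta(x,u)$ where $H(u)^\top=[\,J_h(u)^\top\ \ I_N\,]$ and $J_h(u)\in\mathbb{R}^{n\times N}$ is the Jacobian of $h$. The map $\phi_\xi:\mathbb{R}^N\to\mathbb{R}^N$ is $\phi_\xi(s)=\frac{s}{|s|^{\xi_1}}+\frac{s}{|s|^{\xi_2}}$ for $s\ne0$ and $\phi_\xi(0)=0$ (continuous). Classes: $\mathcal{K}$ is the set of continuous strictly increasing $\alpha:\mathbb{R}_{\ge0}\to\mathbb{R}_{\ge0}$ with $\alpha(0)=0$. A continuous $\beta:\mathbb{R}_{\ge0}\times\mathbb{R}_{\ge0}\to\mathbb{R}_{\ge0}$ is of class $\mathcal{KL}_{\mathrm{FxT}}$ if $\beta(\cdot,0)\in\mathcal{K}$, each $\beta(r,\cdot)$ is continuous and non-increasing, and there is a continuous, uniformly bounded $T:\mathbb{R}_{\ge0}\to\mathbb{R}_{\ge0}$ with $T(0)=0$ and $\beta(r,t)=0$ for $t\ge T(r)$. $|\cdot|$ is the Euclidean norm. *)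

theory Defs
  imports "HOL-Analysis.Analysis"
begin

definition classK :: "(real \<Rightarrow> real) \<Rightarrow> bool" where
  "classK \<alpha> \<longleftrightarrow> continuous_on {0..} \<alpha> \<and> strict_mono_on {0..} \<alpha> \<and> \<alpha> 0 = 0
     \<and> (\<forall>r\<ge>0. \<alpha> r \<ge> 0)"

definition classKL_FxT :: "(real \<Rightarrow> real \<Rightarrow> real) \<Rightarrow> bool" where
  "classKL_FxT \<beta> \<longleftrightarrow>
     continuous_on ({0..} \<times> {0..}) (\<lambda>z. \<beta> (fst z) (snd z))
   \<and> (\<forall>r\<ge>0. \<forall>t\<ge>0. \<beta> r t \<ge> 0)
   \<and> classK (\<lambda>r. \<beta> r 0)
   \<and> (\<forall>r\<ge>0. continuous_on {0..} (\<beta> r) \<and> (\<forall>s t. 0 \<le> s \<longrightarrow> s \<le> t \<longrightarrow> \<beta> r t \<le> \<beta> r s))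
   \<and> (\<exists>T :: real \<Rightarrow> real. continuous_on {0..} T \<and> (\<forall>r\<ge>0. T r \<ge> 0)
        \<and> bounded (T ` {0..}) \<and> T 0 = 0 \<and> (\<forall>r\<ge>0. \<forall>t\<ge>T r. \<beta> r t = 0))"

definition phi_xi :: "real \<Rightarrow> real \<Rightarrow> 'a::real_normed_vector \<Rightarrow> 'a" where
  "phi_xi xi1 xi2 s = (if s = 0 then 0
      else (1 / norm s powr xi1) *\<^sub>R s + (1 / norm s powr xi2) *\<^sub>R s)"

text \<open>G_theta(x,u) = H(u)^T grad phi_theta(x,u) = J_h(u)^T (d_x phi) + (d_u phi),
  where gx, gu are the x- and u-blocks of the gradient of phi_theta.\<close>
definition Gmap :: "(real^'N \<Rightarrow> real^'N^'n) \<Rightarrow> (real^'m \<Rightarrow> real^'n \<Rightarrow> real^'N \<Rightarrow> real^'n)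
     \<Rightarrow> (real^'m \<Rightarrow> real^'n \<Rightarrow> real^'N \<Rightarrow> real^'N) \<Rightarrow> real^'m \<Rightarrow> real^'n \<Rightarrow> real^'N \<Rightarrow> real^'N" where
  "Gmap Jh gx gu \<theta> x u = transpose (Jh u) *v gx \<theta> x u + gu \<theta> x u"

end

theory Submission
  imports Defs
begin


lemma right_nonincr:
  fixes g :: "real \<Rightarrow> real"
  assumes ab: "a \<le> b" and cont: "continuous_on {a..b} g"
    and loc: "\<And>t. t \<in> {a..<b} \<Longrightarrow> \<exists>d>0. \<forall>s. t < s \<and> s < t + d \<and> s \<le> b \<longrightarrow> g s \<le> g t"
  shows "g b \<le> g a"
proof (rule ccontr)
  assume nb: "\<not> g b \<le> g a"
  define Z where "Z = {a..b} \<inter> g -` {..g a}"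
  have "closed Z" unfolding Z_def by (rule continuous_closed_preimage[OF cont]) auto
  moreover have "bounded Z" unfolding Z_def by (rule bounded_subset[of "{a..b}"]) auto
  ultimately have "compact Z" by (simp add: compact_eq_bounded_closed)
  moreover have "a \<in> Z" using ab by (auto simp: Z_def)
  ultimately obtain c where cZ: "c \<in> Z" and cmax: "\<forall>z\<in>Z. z \<le> c"
    using compact_attains_sup[of Z] by blast
  have "c \<noteq> b" using cZ nb by (auto simp: Z_def)
  hence cb: "c \<in> {a..<b}" using cZ by (auto simp: Z_def)
  obtain d where d: "d > 0" "\<forall>s. c < s \<and> s < c + d \<and> s \<le> b \<longrightarrow> g s \<le> g c"
    using loc[OF cb] by blast
  define s where "s = min (c + d/2) b"
  have s1: "c < s" "s < c + d" "s \<le> b" using d cb by (auto simp: s_def)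
  have "g s \<le> g c" using d s1 by blast
  also have "g c \<le> g a" using cZ by (auto simp: Z_def)
  finally have "s \<in> Z" using s1 cb by (auto simp: Z_def)
  thus False using cmax s1 by force
qed

lemma deriv_right_bound:
  fixes Y :: "real \<Rightarrow> real"
  assumes der: "(Y has_real_derivative D) (at t within {a..b})" and t: "t \<in> {a..<b}"
    and Dm: "D \<le> -m" and e: "e > 0"
  shows "\<exists>d>0. \<forall>s. t < s \<and> s < t + d \<and> s \<le> b \<longrightarrow> Y s \<le> Y t - (m - e) * (s - t)"
proof -
  have "((\<lambda>y. (Y y - Y t) / (y - t)) \<longlongrightarrow> D) (at t within {a..b})"
    using der by (simp add: has_field_derivative_iff)
  hence "eventually (\<lambda>y. (Y y - Y t) / (y - t) < D + e) (at t within {a..b})"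
    using e by (intro order_tendstoD(2)) auto
  then obtain d where d: "d > 0" "\<forall>y\<in>{a..b}. y \<noteq> t \<and> dist y t < d \<longrightarrow> (Y y - Y t) / (y - t) < D + e"
    unfolding eventually_at by blast
  show ?thesis
  proof (intro exI[of _ d] conjI allI impI)
    fix s assume s: "t < s \<and> s < t + d \<and> s \<le> b"
    hence "s \<in> {a..b}" "s \<noteq> t" "dist s t < d" using t by (auto simp: dist_real_def)
    hence q: "(Y s - Y t) / (s - t) < D + e" using d by blast
    have "Y s - Y t < (D + e) * (s - t)" using q s by (simp add: divide_less_eq)
    also have "\<dots> \<le> (-m + e) * (s - t)" using Dm s by (intro mult_right_mono) auto
    finally show "Y s \<le> Y t - (m - e) * (s - t)" by (simp add: algebra_simps)
  qed (use d in auto)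
qed

lemma cont_right_bound:
  fixes Y :: "real \<Rightarrow> real"
  assumes cont: "continuous_on {a..b} Y" and t: "t \<in> {a..<b}" and lt: "Y t < c"
  shows "\<exists>d>0. \<forall>s. t < s \<and> s < t + d \<and> s \<le> b \<longrightarrow> Y s \<le> c - k * (s - t)"
proof -
  have "continuous_on {a..b} (\<lambda>s. Y s + k * (s - t))"
    by (intro continuous_intros cont)
  moreover have "t \<in> {a..b}" using t by auto
  ultimately have "((\<lambda>s. Y s + k * (s - t)) \<longlongrightarrow> Y t + k * (t - t)) (at t within {a..b})"
    unfolding continuous_on_def by blast
  hence "eventually (\<lambda>s. Y s + k * (s - t) < c) (at t within {a..b})"
    using lt by (intro order_tendstoD(2)) auto
  then obtain d where d: "d > 0" "\<forall>y\<in>{a..b}. y \<noteq> t \<and> dist y t < d \<longrightarrow> Y y + k * (y - t) < c"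
    unfolding eventually_at by blast
  show ?thesis
  proof (intro exI[of _ d] conjI allI impI)
    fix s assume s: "t < s \<and> s < t + d \<and> s \<le> b"
    hence "s \<in> {a..b}" "s \<noteq> t" "dist s t < d" using t by (auto simp: dist_real_def)
    hence "Y s + k * (s - t) < c" using d by blast
    thus "Y s \<le> c - k * (s - t)" by simp
  qed (use d in auto)
qed

lemma max_decr:
  fixes Y1 Y2 :: "real \<Rightarrow> real"
  assumes ab: "a \<le> b" and c1: "continuous_on {a..b} Y1" and c2: "continuous_on {a..b} Y2"
    and d1: "\<And>t. t \<in> {a..<b} \<Longrightarrow> Y1 t \<ge> Y2 t \<Longrightarrow> \<exists>D. (Y1 has_real_derivative D) (at t within {a..b}) \<and> D \<le> -m"
    and d2: "\<And>t. t \<in> {a..<b} \<Longrightarrow> Y2 t \<ge> Y1 t \<Longrightarrow> \<exists>D. (Y2 has_real_derivative D) (at t within {a..b}) \<and> D \<le> -m"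
  shows "max (Y1 b) (Y2 b) \<le> max (Y1 a) (Y2 a) - m * (b - a)"
proof (rule field_le_epsilon)
  fix e :: real assume e: "e > 0"
  define e' where "e' = e / (b - a + 1)"
  have e': "e' > 0" using e ab by (simp add: e'_def)
  define g where "g t = max (Y1 t) (Y2 t) + (m - e') * (t - a)" for t
  have loc: "\<exists>d>0. \<forall>s. t < s \<and> s < t + d \<and> s \<le> b \<longrightarrow> Y s \<le> max (Y1 t) (Y2 t) - (m - e') * (s - t)"
    if t: "t \<in> {a..<b}" and Y: "(Y = Y1 \<and> Y2 = Z) \<or> (Y = Y2 \<and> Y1 = Z)" for t Y Z
  proof (cases "Y t = max (Y1 t) (Y2 t)")
    case True
    then obtain D where "(Y has_real_derivative D) (at t within {a..b})" "D \<le> -m"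
      using d1[OF t] d2[OF t] Y by (metis max.cobounded1 max.cobounded2 max.commute)
    from deriv_right_bound[OF this(1) t this(2) e'] True show ?thesis by simp
  next
    case False
    hence "Y t < max (Y1 t) (Y2 t)" using Y by auto
    moreover have "continuous_on {a..b} Y" using Y c1 c2 by auto
    ultimately show ?thesis using cont_right_bound[OF _ t] by blast
  qed
  have "g b \<le> g a"
  proof (rule right_nonincr[OF ab])
    show "continuous_on {a..b} g" unfolding g_def by (intro continuous_intros c1 c2)
  next
    fix t assume t: "t \<in> {a..<b}"
    obtain da where da: "da > 0" "\<forall>s. t < s \<and> s < t + da \<and> s \<le> b \<longrightarrow> Y1 s \<le> max (Y1 t) (Y2 t) - (m - e') * (s - t)"
      using loc[OF t, of Y1 Y2] by blast
    obtain db where db: "db > 0" "\<forall>s. t < s \<and> s < t + db \<and> s \<le> b \<longrightarrow> Y2 s \<le> max (Y1 t) (Y2 t) - (m - e') * (s - t)"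
      using loc[OF t, of Y2 Y1] by blast
    show "\<exists>d>0. \<forall>s. t < s \<and> s < t + d \<and> s \<le> b \<longrightarrow> g s \<le> g t"
    proof (intro exI[of _ "min da db"] conjI allI impI)
      fix s assume s: "t < s \<and> s < t + min da db \<and> s \<le> b"
      have "max (Y1 s) (Y2 s) \<le> max (Y1 t) (Y2 t) - (m - e') * (s - t)"
        using da db s by auto
      thus "g s \<le> g t" unfolding g_def by (simp add: algebra_simps)
    qed (use da db in auto)
  qed
  hence "max (Y1 b) (Y2 b) \<le> max (Y1 a) (Y2 a) - m * (b - a) + e' * (b - a)"
    unfolding g_def by (simp add: algebra_simps)
  also have "e' * (b - a) \<le> e"
    using e ab by (simp add: e'_def field_simps)
  finally show "max (Y1 b) (Y2 b) \<le> max (Y1 a) (Y2 a) - m * (b - a) + e" by simp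
qed

lemma phase_aux:
  fixes Vi Vj psi psi' :: "real \<Rightarrow> real"
  assumes ci: "continuous_on {a..b} Vi" and c: "c > 0"
    and lb: "\<forall>t\<in>{a..b}. max (Vi t) (Vj t) \<ge> c"
    and di: "\<And>t. t \<in> {a..<b} \<Longrightarrow> Vi t \<ge> Vj t \<Longrightarrow> \<exists>D. (Vi has_real_derivative D) (at t within {a..b}) \<and> psi' (Vi t) * D \<le> -m"
    and pd: "\<And>y. y > c/2 \<Longrightarrow> (psi has_real_derivative psi' y) (at y)"
    and ps: "\<And>x y. c/2 \<le> x \<Longrightarrow> x < y \<Longrightarrow> psi x < psi y"
    and t: "t \<in> {a..<b}"
    and ge: "psi (max (Vi t) (c/2)) \<ge> psi (max (Vj t) (c/2))"
  shows "\<exists>D. ((\<lambda>t. psi (max (Vi t) (c/2))) has_real_derivative D) (at t within {a..b}) \<and> D \<le> -m"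
proof -
  have tab: "t \<in> {a..b}" using t by auto
  have "max (Vi t) (c/2) \<ge> max (Vj t) (c/2)"
    using ps[of "max (Vi t) (c/2)" "max (Vj t) (c/2)"] ge by (metis max.cobounded2 not_le)
  moreover have "max (Vi t) (Vj t) \<ge> c" using lb tab by blast
  ultimately have V: "Vi t \<ge> Vj t" "Vi t \<ge> c" using c by (auto simp: max_def split: if_splits)
  obtain D where D: "(Vi has_real_derivative D) (at t within {a..b})" "psi' (Vi t) * D \<le> -m"
    using di[OF t V(1)] by blast
  have ch: "((\<lambda>s. psi (Vi s)) has_real_derivative psi' (Vi t) * D) (at t within {a..b})"
    by (rule DERIV_chain2[OF pd D(1)]) (use V c in auto)
  have "((\<lambda>s. Vi s) \<longlongrightarrow> Vi t) (at t within {a..b})"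
    using ci tab unfolding continuous_on_def by blast
  hence "eventually (\<lambda>s. Vi s > c/2) (at t within {a..b})"
    using V c by (intro order_tendstoD(1)) auto
  then obtain d where d: "d > 0" "\<forall>s\<in>{a..b}. s \<noteq> t \<and> dist s t < d \<longrightarrow> Vi s > c/2"
    unfolding eventually_at by blast
  have "((\<lambda>s. psi (max (Vi s) (c/2))) has_real_derivative psi' (Vi t) * D) (at t within {a..b})"
  proof (rule has_field_derivative_transform_within[OF ch d(1) tab])
    fix s assume "s \<in> {a..b}" "dist s t < d"
    hence "Vi s \<ge> c/2" using d V c by (cases "s = t") force+
    thus "psi (Vi s) = psi (max (Vi s) (c/2))" by simp
  qed
  thus ?thesis using D(2) by blast
qed

lemma phase_lemma:
  fixes Va Vb psi psi' :: "real \<Rightarrow> real"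
  assumes ab: "a \<le> b" and c1: "continuous_on {a..b} Va" and c2: "continuous_on {a..b} Vb"
    and c: "c > 0" and lb: "\<forall>t\<in>{a..b}. max (Va t) (Vb t) \<ge> c"
    and d1: "\<And>t. t \<in> {a..<b} \<Longrightarrow> Va t \<ge> Vb t \<Longrightarrow> \<exists>D. (Va has_real_derivative D) (at t within {a..b}) \<and> psi' (Va t) * D \<le> -m"
    and d2: "\<And>t. t \<in> {a..<b} \<Longrightarrow> Vb t \<ge> Va t \<Longrightarrow> \<exists>D. (Vb has_real_derivative D) (at t within {a..b}) \<and> psi' (Vb t) * D \<le> -m"
    and pd: "\<And>y. y > c/2 \<Longrightarrow> (psi has_real_derivative psi' y) (at y)"
    and pc: "continuous_on {c/2..} psi"
    and ps: "\<And>x y. c/2 \<le> x \<Longrightarrow> x < y \<Longrightarrow> psi x < psi y"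
  shows "psi (max (Va b) (Vb b)) \<le> psi (max (Va a) (Vb a)) - m * (b - a)"
proof -
  define Y1 where "Y1 t = psi (max (Va t) (c/2))" for t
  define Y2 where "Y2 t = psi (max (Vb t) (c/2))" for t
  have mx: "max (psi x) (psi y) = psi (max x y)" if "c/2 \<le> x" "c/2 \<le> y" for x y
    using ps[of x y] ps[of y x] that by (cases x y rule: linorder_cases) (auto simp: max_def)
  have key: "max (Y1 t) (Y2 t) = psi (max (Va t) (Vb t))" if "t \<in> {a..b}" for t
  proof -
    have "max (Y1 t) (Y2 t) = psi (max (max (Va t) (c/2)) (max (Vb t) (c/2)))"
      unfolding Y1_def Y2_def by (rule mx) auto
    also have "max (max (Va t) (c/2)) (max (Vb t) (c/2)) = max (Va t) (Vb t)"
    proof -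
      have "c \<le> max (Va t) (Vb t)" using lb that by blast
      thus ?thesis using c by (auto simp: max_def split: if_splits)
    qed
    finally show ?thesis .
  qed
  have cY1: "continuous_on {a..b} Y1" unfolding Y1_def
    by (rule continuous_on_compose2[OF pc, of _ "\<lambda>t. max (Va t) (c/2)"]) (auto intro!: continuous_intros c1)
  have cY2: "continuous_on {a..b} Y2" unfolding Y2_def
    by (rule continuous_on_compose2[OF pc, of _ "\<lambda>t. max (Vb t) (c/2)"]) (auto intro!: continuous_intros c2)
  have lb2: "\<forall>t\<in>{a..b}. max (Vb t) (Va t) \<ge> c" using lb by (auto simp: max.commute)
  have "max (Y1 b) (Y2 b) \<le> max (Y1 a) (Y2 a) - m * (b - a)"
  proof (rule max_decr[OF ab cY1 cY2])
    fix t assume "t \<in> {a..<b}" "Y2 t \<le> Y1 t"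
    thus "\<exists>D. (Y1 has_real_derivative D) (at t within {a..b}) \<and> D \<le> - m"
      unfolding Y1_def using phase_aux[OF c1 c lb d1 pd ps] Y2_def by auto
  next
    fix t assume "t \<in> {a..<b}" "Y1 t \<le> Y2 t"
    thus "\<exists>D. (Y2 has_real_derivative D) (at t within {a..b}) \<and> D \<le> - m"
      unfolding Y2_def using phase_aux[OF c2 c lb2 d2 pd ps] Y1_def by auto
  qed
  thus ?thesis using key[of a] key[of b] ab by auto
qed

lemma powr_half_sq:
  fixes v a :: real assumes "v \<ge> 0"
  shows "v powr (a/2) = (sqrt v) powr a"
  using assms by (simp add: powr_half_sqrt[symmetric] powr_powr)

lemma psi_r_bound:
  fixes V D k r s P rho :: real
  assumes V: "V \<ge> rho^2" and rho: "rho > 0" and k: "k > 0" and r: "0 < r" "r < 1"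
    and D: "D \<le> -k * (V powr ((1+r)/2) + V powr ((1+s)/2)) + P * V powr (1/2)"
    and P: "P \<le> (k/2) * rho powr r"
  shows "((1-r)/2 * V powr ((1-r)/2 - 1)) * D \<le> -((1-r)*k/4)"
proof -
  have "rho^2 > 0" using rho by simp
  hence Vp: "V > 0" using V by linarith
  define X where "X = V powr ((1-r)/2 - 1)"
  have X: "X > 0" using Vp by (simp add: X_def)
  have ex: "(1-r)/2 - 1 + (1+r)/2 = (0::real)" by (simp add: field_simps)
  have e1: "X * V powr ((1+r)/2) = 1" using Vp
    by (simp add: X_def powr_add[symmetric] ex)
  have ex2: "(1-r)/2 - 1 + 1/2 = (-r/2::real)" by (simp add: field_simps)
  have e2: "X * V powr (1/2) = V powr (-r/2)" using Vp
    by (simp add: X_def powr_add[symmetric] ex2)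
  have "X * D \<le> X * (-k * (V powr ((1+r)/2) + V powr ((1+s)/2)) + P * V powr (1/2))"
    using D X by (intro mult_left_mono) auto
  also have "\<dots> = -k - k * (X * V powr ((1+s)/2)) + P * V powr (-r/2)"
    using e1 e2 by (simp add: algebra_simps)
  also have "\<dots> \<le> -k + P * V powr (-r/2)"
    using k X by (simp add: mult_nonneg_nonneg)
  also have "P * V powr (-r/2) \<le> k/2"
  proof (cases "P \<le> 0")
    case True
    have "P * V powr (-r/2) \<le> 0" using True by (simp add: mult_nonpos_nonneg)
    thus ?thesis using k by linarith
  next
    case False
    have "V powr (-r/2) \<le> (rho^2) powr (-r/2)"
      using V rho r by (intro powr_mono2') auto
    also have "(rho^2) powr (-r/2) = rho powr (-r)"
    proof -
      have "(rho^2) powr (-r/2) = (rho powr 2) powr (-r/2)" using rho by simp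
      also have "\<dots> = rho powr (-r)" by (simp only: powr_powr) simp
      finally show ?thesis .
    qed
    finally have "P * V powr (-r/2) \<le> P * rho powr (-r)" using False by (intro mult_left_mono) auto
    also have "\<dots> \<le> (k/2) * rho powr r * rho powr (-r)" using P by (intro mult_right_mono) auto
    also have "\<dots> = k/2" using rho by (simp add: powr_add[symmetric])
    finally show ?thesis .
  qed
  finally have "X * D \<le> -k/2" by simp
  hence "(1-r)/2 * (X * D) \<le> (1-r)/2 * (-k/2)" using r by (intro mult_left_mono) auto
  thus ?thesis by (simp add: X_def algebra_simps)
qed

lemma psi_s_bound:
  fixes V D k r s P rho :: real
  assumes V: "V \<ge> rho^2" and rho: "rho > 0" and k: "k > 0" and r: "0 < r" "r < 1" and s: "s > 1"
    and D: "D \<le> -k * (V powr ((1+r)/2) + V powr ((1+s)/2)) + P * V powr (1/2)"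
    and P: "P \<le> (k/2) * rho powr r"
  shows "(- ((1-s)/2 * V powr ((1-s)/2 - 1))) * D \<le> -((s-1)*k/2)"
proof -
  have "rho^2 > 0" using rho by simp
  hence Vp: "V > 0" using V by linarith
  define X where "X = V powr ((1-s)/2 - 1)"
  have X: "X > 0" using Vp by (simp add: X_def)
  have ex1: "(1-s)/2 - 1 + (1+r)/2 = ((r-s)/2::real)" by (simp add: field_simps)
  have e1: "X * V powr ((1+r)/2) = V powr ((r-s)/2)" using Vp
    by (simp add: X_def powr_add[symmetric] ex1)
  have ex: "(1-s)/2 - 1 + (1+s)/2 = (0::real)" by (simp add: field_simps)
  have e2: "X * V powr ((1+s)/2) = 1" using Vp
    by (simp add: X_def powr_add[symmetric] ex)
  have ex3: "(1-s)/2 - 1 + 1/2 = (-r/2 + (r-s)/2::real)" by (simp add: field_simps)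
  have e3: "X * V powr (1/2) = V powr (-r/2) * V powr ((r-s)/2)" using Vp
    by (simp only: X_def powr_add[symmetric] ex3)
  have "X * D \<le> X * (-k * (V powr ((1+r)/2) + V powr ((1+s)/2)) + P * V powr (1/2))"
    using D X by (intro mult_left_mono) auto
  also have "\<dots> = -k * (X * V powr ((1+r)/2)) - k * (X * V powr ((1+s)/2)) + P * (X * V powr (1/2))"
    by (simp add: algebra_simps)
  also have "\<dots> = -k * V powr ((r-s)/2) - k + (P * V powr (-r/2)) * V powr ((r-s)/2)"
    using e1 e2 e3 by simp
  also have "P * V powr (-r/2) \<le> k/2"
  proof (cases "P \<le> 0")
    case True
    have "P * V powr (-r/2) \<le> 0" using True by (simp add: mult_nonpos_nonneg)
    thus ?thesis using k by linarith
  next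
    case False
    have "V powr (-r/2) \<le> (rho^2) powr (-r/2)"
      using V rho r by (intro powr_mono2') auto
    also have "(rho^2) powr (-r/2) = rho powr (-r)"
    proof -
      have "(rho^2) powr (-r/2) = (rho powr 2) powr (-r/2)" using rho by simp
      also have "\<dots> = rho powr (-r)" by (simp only: powr_powr) simp
      finally show ?thesis .
    qed
    finally have "P * V powr (-r/2) \<le> P * rho powr (-r)" using False by (intro mult_left_mono) auto
    also have "\<dots> \<le> (k/2) * rho powr r * rho powr (-r)" using P by (intro mult_right_mono) auto
    also have "\<dots> = k/2" using rho by (simp add: powr_add[symmetric])
    finally show ?thesis .
  qed
  hence "-k * V powr ((r-s)/2) - k + (P * V powr (-r/2)) * V powr ((r-s)/2) \<le>
         -k * V powr ((r-s)/2) - k + (k/2) * V powr ((r-s)/2)"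
    by (intro add_left_mono mult_right_mono) auto
  also have "\<dots> \<le> -k" using k by (simp add: mult_nonneg_nonneg)
  finally have "X * D \<le> -k" .
  hence "(s-1)/2 * (X * D) \<le> (s-1)/2 * (-k)" using s by (intro mult_left_mono) auto
  moreover have "(- ((1-s)/2 * X)) * D = (s-1)/2 * (X * D)" by (simp add: field_simps)
  moreover have "(s-1)/2 * (-k) = -((s-1)*k/2)" by simp
  ultimately have "(- ((1-s)/2 * X)) * D \<le> -((s-1)*k/2)" by linarith
  thus ?thesis by (simp only: X_def)
qed



definition zs :: "real \<Rightarrow> real \<Rightarrow> real \<Rightarrow> real \<Rightarrow> real" where
  "zs ms s w \<tau> = w / (1 + ms * \<tau> * w powr (s - 1)) powr (1 / (s - 1))"

definition bet :: "real \<Rightarrow> real \<Rightarrow> real \<Rightarrow> real \<Rightarrow> real \<Rightarrow> real \<Rightarrow> real" where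
  "bet mr ms r s w t = (max 0 (zs ms s w (t/2) powr (1 - r) - mr * t / 2)) powr (1 / (1 - r))"

lemma phase_gen:
  fixes V1 V2 V1' V2' psi psi' :: "real \<Rightarrow> real"
  assumes c1: "continuous_on {0..} V1" and c2: "continuous_on {0..} V2"
    and der1: "\<And>t. t \<ge> 0 \<Longrightarrow> (V1 has_real_derivative V1' t) (at t within {0..})"
    and der2: "\<And>t. t \<ge> 0 \<Longrightarrow> (V2 has_real_derivative V2' t) (at t within {0..})"
    and rho: "rho > 0"
    and ineq1: "\<And>t. t \<ge> 0 \<Longrightarrow> V1 t \<ge> V2 t \<Longrightarrow> V1 t \<ge> rho^2 \<Longrightarrow>
       V1' t \<le> -k * (V1 t powr ((1+r)/2) + V1 t powr ((1+s)/2)) + P * V1 t powr (1/2)"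
    and ineq2: "\<And>t. t \<ge> 0 \<Longrightarrow> V2 t \<ge> V1 t \<Longrightarrow> V2 t \<ge> rho^2 \<Longrightarrow>
       V2' t \<le> -k * (V2 t powr ((1+r)/2) + V2 t powr ((1+s)/2)) + P * V2 t powr (1/2)"
    and pb: "\<And>V D. V \<ge> rho^2 \<Longrightarrow> D \<le> -k * (V powr ((1+r)/2) + V powr ((1+s)/2)) + P * V powr (1/2)
        \<Longrightarrow> psi' V * D \<le> -m"
    and pd: "\<And>y. y > rho^2/2 \<Longrightarrow> (psi has_real_derivative psi' y) (at y)"
    and pc: "continuous_on {rho^2/2..} psi"
    and ps: "\<And>x y. rho^2/2 \<le> x \<Longrightarrow> x < y \<Longrightarrow> psi x < psi y"
    and ab: "0 \<le> a" "a \<le> b"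
    and lb: "\<forall>t\<in>{a..b}. max (V1 t) (V2 t) \<ge> rho^2"
  shows "psi (max (V1 b) (V2 b)) \<le> psi (max (V1 a) (V2 a)) - m * (b - a)"
proof (rule phase_lemma[where Va=V1 and Vb=V2 and psi=psi and psi'=psi' and m=m and c="rho^2", OF ab(2) _ _ _ lb _ _ pd pc ps])
  show "continuous_on {a..b} V1" using ab by (intro continuous_on_subset[OF c1]) auto
  show "continuous_on {a..b} V2" using ab by (intro continuous_on_subset[OF c2]) auto
  show "rho^2 > 0" using rho by simp
next
  fix t assume t: "t \<in> {a..<b}" "V2 t \<le> V1 t"
  have "t \<in> {a..b}" using t by auto
  hence "max (V1 t) (V2 t) \<ge> rho^2" using lb by blast
  hence "V1 t \<ge> rho^2" using t by (auto simp: max_def split: if_splits)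
  moreover have "t \<ge> 0" using t ab by auto
  ultimately have "psi' (V1 t) * V1' t \<le> -m" using t by (intro pb[OF _ ineq1]) auto
  moreover have "(V1 has_real_derivative V1' t) (at t within {a..b})"
    by (rule DERIV_subset[OF der1]) (use t ab in auto)
  ultimately show "\<exists>D. (V1 has_real_derivative D) (at t within {a..b}) \<and> psi' (V1 t) * D \<le> - m" by blast
next
  fix t assume t: "t \<in> {a..<b}" "V1 t \<le> V2 t"
  have "t \<in> {a..b}" using t by auto
  hence "max (V1 t) (V2 t) \<ge> rho^2" using lb by blast
  hence "V2 t \<ge> rho^2" using t by (auto simp: max_def split: if_splits)
  moreover have "t \<ge> 0" using t ab by auto
  ultimately have "psi' (V2 t) * V2' t \<le> -m" using t by (intro pb[OF _ ineq2]) auto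
  moreover have "(V2 has_real_derivative V2' t) (at t within {a..b})"
    by (rule DERIV_subset[OF der2]) (use t ab in auto)
  ultimately show "\<exists>D. (V2 has_real_derivative D) (at t within {a..b}) \<and> psi' (V2 t) * D \<le> - m" by blast
qed


lemma final_alg:
  fixes v0 v1 v2 mr ms r s t :: real
  assumes v: "v0 > 0" "v1 > 0" "v2 > 0" and ms: "ms \<ge> 0" and s: "s > 1" and r: "0 < r" "r < 1"
    and t: "t \<ge> 0"
    and h1: "-(v1 powr ((1-s)/2)) \<le> -(v0 powr ((1-s)/2)) - ms * (t/2 - 0)"
    and h2: "v2 powr ((1-r)/2) \<le> v1 powr ((1-r)/2) - mr * (t - t/2)"
  shows "sqrt v2 \<le> bet mr ms r s (sqrt v0) t"
proof -
  define w0 where "w0 = sqrt v0"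
  define w1 where "w1 = sqrt v1"
  define w2 where "w2 = sqrt v2"
  have w: "w0 > 0" "w1 > 0" "w2 > 0" using v by (auto simp: w0_def w1_def w2_def)
  have h1': "w1 powr (1-s) \<ge> w0 powr (1-s) + ms * (t/2)"
    using h1 v by (simp add: powr_half_sq w0_def w1_def)
  have h2': "w2 powr (1-r) \<le> w1 powr (1-r) - mr * (t/2)"
    using h2 v by (simp add: powr_half_sq w2_def w1_def)
  define Q where "Q = 1 + ms * (t/2) * w0 powr (s - 1)"
  have Q: "Q \<ge> 1" using ms t w by (simp add: Q_def)
  have inv: "w0 powr (1-s) * w0 powr (s-1) = 1" using w by (simp add: powr_add[symmetric])
  have eq: "w0 powr (1-s) + ms * (t/2) = w0 powr (1-s) * Q"
    unfolding Q_def using inv by (simp add: algebra_simps)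
  have s1: "(1 - s) * (1 / (1 - s)) = 1" using s by simp
  have "w1 = (w1 powr (1-s)) powr (1/(1-s))"
    using w s1 by (simp add: powr_powr)
  also have "\<dots> \<le> (w0 powr (1-s) * Q) powr (1/(1-s))"
    using h1' eq s w Q by (intro powr_mono2') (auto simp: divide_nonpos_neg)
  also have "\<dots> = w0 * Q powr (1/(1-s))"
    using w Q s1 by (simp add: powr_mult powr_powr)
  also have "1/(1-s) = - (1/(s-1))" using s by (simp add: field_simps)
  also have "w0 * Q powr (- (1/(s-1))) = zs ms s w0 (t/2)"
    using Q by (simp add: zs_def Q_def powr_minus_divide)
  finally have w1z: "w1 \<le> zs ms s w0 (t/2)" .
  have "w1 powr (1-r) \<le> zs ms s w0 (t/2) powr (1-r)"
    using w1z w r by (intro powr_mono2) auto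
  hence "w2 powr (1-r) \<le> max 0 (zs ms s w0 (t/2) powr (1 - r) - mr * t / 2)"
    using h2' by auto
  hence "(w2 powr (1-r)) powr (1/(1-r)) \<le> (max 0 (zs ms s w0 (t/2) powr (1 - r) - mr * t / 2)) powr (1/(1-r))"
    using r by (intro powr_mono2) auto
  moreover have "(w2 powr (1-r)) powr (1/(1-r)) = w2" using w r by (simp add: powr_powr)
  ultimately show ?thesis by (simp add: bet_def w0_def w2_def)
qed


lemma scalar_iss:
  fixes V1 V2 V1' V2' :: "real \<Rightarrow> real"
  assumes c1: "continuous_on {0..} V1" and c2: "continuous_on {0..} V2"
    and der1: "\<And>t. t \<ge> 0 \<Longrightarrow> (V1 has_real_derivative V1' t) (at t within {0..})"
    and der2: "\<And>t. t \<ge> 0 \<Longrightarrow> (V2 has_real_derivative V2' t) (at t within {0..})"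
    and k: "k > 0" and r: "0 < r" "r < 1" and s: "s > 1" and rho: "rho > 0"
    and P: "P \<le> (k/2) * rho powr r"
    and ineq1: "\<And>t. t \<ge> 0 \<Longrightarrow> V1 t \<ge> V2 t \<Longrightarrow> V1 t \<ge> rho^2 \<Longrightarrow>
       V1' t \<le> -k * (V1 t powr ((1+r)/2) + V1 t powr ((1+s)/2)) + P * V1 t powr (1/2)"
    and ineq2: "\<And>t. t \<ge> 0 \<Longrightarrow> V2 t \<ge> V1 t \<Longrightarrow> V2 t \<ge> rho^2 \<Longrightarrow>
       V2' t \<le> -k * (V2 t powr ((1+r)/2) + V2 t powr ((1+s)/2)) + P * V2 t powr (1/2)"
    and t: "t \<ge> 0"
  shows "sqrt (max (V1 t) (V2 t)) \<le> max rho (bet ((1-r)*k/4) ((s-1)*k/2) r s (sqrt (max (V1 0) (V2 0))) t)"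
proof -
  define Vm where "Vm \<tau> = max (V1 \<tau>) (V2 \<tau>)" for \<tau>
  have rho2: "rho^2 > 0" "rho^2/2 > 0" using rho by auto
  have cm: "continuous_on {0..} Vm" unfolding Vm_def by (intro continuous_intros c1 c2)
  have PR: "Vm b powr ((1-r)/2) \<le> Vm a powr ((1-r)/2) - ((1-r)*k/4) * (b - a)"
    if ab: "0 \<le> a" "a \<le> b" and lb: "\<forall>\<tau>\<in>{a..b}. Vm \<tau> \<ge> rho^2" for a b
    unfolding Vm_def
  proof (rule phase_gen[where psi="\<lambda>y. y powr ((1-r)/2)" and psi'="\<lambda>y. (1-r)/2 * y powr ((1-r)/2 - 1)",
        OF c1 c2 der1 der2 rho ineq1 ineq2 _ _ _ _ ab])
    show "\<forall>t\<in>{a..b}. rho\<^sup>2 \<le> max (V1 t) (V2 t)" using lb by (simp add: Vm_def)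
  next
    fix V D assume "rho^2 \<le> V" "D \<le> - k * (V powr ((1 + r) / 2) + V powr ((1 + s) / 2)) + P * V powr (1 / 2)"
    thus "(1-r)/2 * V powr ((1-r)/2 - 1) * D \<le> - ((1 - r) * k / 4)"
      using psi_r_bound[OF _ rho k r _ P] by blast
  next
    fix y :: real assume "y > rho^2/2"
    hence "y > 0" using rho2 by linarith
    thus "((\<lambda>y. y powr ((1 - r) / 2)) has_real_derivative (1-r)/2 * y powr ((1-r)/2 - 1)) (at y)"
      by (rule has_real_derivative_powr)
  next
    show "continuous_on {rho\<^sup>2 / 2..} (\<lambda>y. y powr ((1 - r) / 2))"
      using rho2 by (intro continuous_on_powr' continuous_intros) auto
  next
    fix x y :: real assume xy: "rho^2/2 \<le> x" "x < y"
    hence "0 \<le> x" using rho2 by linarith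
    thus "x powr ((1 - r) / 2) < y powr ((1 - r) / 2)"
      using xy r by (intro powr_less_mono2) auto
  qed
  have PS: "-(Vm b powr ((1-s)/2)) \<le> -(Vm a powr ((1-s)/2)) - ((s-1)*k/2) * (b - a)"
    if ab: "0 \<le> a" "a \<le> b" and lb: "\<forall>\<tau>\<in>{a..b}. Vm \<tau> \<ge> rho^2" for a b
    unfolding Vm_def
  proof (rule phase_gen[where psi="\<lambda>y. -(y powr ((1-s)/2))" and psi'="\<lambda>y. -((1-s)/2 * y powr ((1-s)/2 - 1))",
        OF c1 c2 der1 der2 rho ineq1 ineq2 _ _ _ _ ab])
    show "\<forall>t\<in>{a..b}. rho\<^sup>2 \<le> max (V1 t) (V2 t)" using lb by (simp add: Vm_def)
  next
    fix V D assume "rho^2 \<le> V" "D \<le> - k * (V powr ((1 + r) / 2) + V powr ((1 + s) / 2)) + P * V powr (1 / 2)"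
    thus "- ((1-s)/2 * V powr ((1-s)/2 - 1)) * D \<le> - ((s - 1) * k / 2)"
      using psi_s_bound[OF _ rho k r s _ P] by blast
  next
    fix y :: real assume "y > rho^2/2"
    hence "y > 0" using rho2 by linarith
    thus "((\<lambda>y. - (y powr ((1 - s) / 2))) has_real_derivative - ((1-s)/2 * y powr ((1-s)/2 - 1))) (at y)"
      by (intro DERIV_minus has_real_derivative_powr)
  next
    show "continuous_on {rho\<^sup>2 / 2..} (\<lambda>y. - (y powr ((1 - s) / 2)))"
      using rho2 by (intro continuous_on_minus continuous_on_powr' continuous_intros) auto
  next
    fix x y :: real assume xy: "rho^2/2 \<le> x" "x < y"
    hence "0 < x" using rho2 by linarith
    hence "y powr ((1 - s) / 2) < x powr ((1 - s) / 2)"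
      using xy s by (intro powr_less_mono2_neg) auto
    thus "- (x powr ((1 - s) / 2)) < - (y powr ((1 - s) / 2))" by simp
  qed
  show ?thesis
  proof (cases "Vm t \<le> rho^2")
    case True
    hence "sqrt (Vm t) \<le> sqrt (rho^2)" by (rule real_sqrt_le_mono)
    thus ?thesis using rho by (simp add: Vm_def)
  next
    case False
    hence big: "Vm t > rho^2" by simp
    have all: "\<forall>\<tau>\<in>{0..t}. Vm \<tau> > rho^2"
    proof (rule ccontr)
      assume "\<not> (\<forall>\<tau>\<in>{0..t}. Vm \<tau> > rho^2)"
      then obtain \<tau>0 where \<tau>0: "\<tau>0 \<in> {0..t}" "Vm \<tau>0 \<le> rho^2" by force
      define Z where "Z = {0..t} \<inter> Vm -` {..rho^2}"
      have cmt: "continuous_on {0..t} Vm" by (rule continuous_on_subset[OF cm]) auto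
      have "closed Z" unfolding Z_def by (rule continuous_closed_preimage[OF cmt]) auto
      moreover have "bounded Z" unfolding Z_def by (rule bounded_subset[of "{0..t}"]) auto
      ultimately have "compact Z" by (simp add: compact_eq_bounded_closed)
      moreover have "\<tau>0 \<in> Z" using \<tau>0 by (auto simp: Z_def)
      ultimately obtain c0 where c0Z: "c0 \<in> Z" and cmax: "\<forall>z\<in>Z. z \<le> c0"
        using compact_attains_sup[of Z] by blast
      have c0: "0 \<le> c0" "c0 \<le> t" "Vm c0 \<le> rho^2" using c0Z by (auto simp: Z_def)
      have "c0 \<noteq> t" using c0 big by auto
      hence c0t: "c0 < t" using c0 by auto
      have gt: "Vm \<tau> > rho^2" if "\<tau> \<in> {c0<..t}" for \<tau>
      proof (rule ccontr)
        assume "\<not> Vm \<tau> > rho^2"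
        hence "\<tau> \<in> Z" using that c0 by (auto simp: Z_def)
        thus False using cmax that by force
      qed
      have eqc: "Vm c0 \<ge> rho^2"
      proof (rule ccontr)
        assume "\<not> Vm c0 \<ge> rho^2"
        hence "Vm c0 < rho^2" by simp
        from cont_right_bound[OF cmt _ this, of 0] c0 c0t
        obtain d where d: "d > 0" "\<forall>s. c0 < s \<and> s < c0 + d \<and> s \<le> t \<longrightarrow> Vm s \<le> rho^2 - 0 * (s - c0)"
          by auto
        define s' where "s' = min (c0 + d/2) t"
        have "c0 < s'" "s' < c0 + d" "s' \<le> t" using d c0t by (auto simp: s'_def)
        hence "Vm s' \<le> rho^2" "s' \<in> {c0<..t}" using d by auto
        thus False using gt by force
      qed
      have lb: "\<forall>\<tau>\<in>{c0..t}. Vm \<tau> \<ge> rho^2"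
      proof
        fix \<tau> assume "\<tau> \<in> {c0..t}"
        thus "Vm \<tau> \<ge> rho^2" using eqc gt[of \<tau>] by (cases "\<tau> = c0") auto
      qed
      have "Vm t powr ((1-r)/2) \<le> Vm c0 powr ((1-r)/2) - ((1-r)*k/4) * (t - c0)"
        by (rule PR[OF c0(1) _ lb]) (use c0 in auto)
      also have "\<dots> \<le> Vm c0 powr ((1-r)/2)" using r k c0t by (simp add: mult_nonneg_nonneg)
      also have "\<dots> \<le> (rho^2) powr ((1-r)/2)" using c0 eqc r by (intro powr_mono2) auto
      finally have A: "Vm t powr ((1-r)/2) \<le> (rho^2) powr ((1-r)/2)" .
      have "(rho^2) powr ((1-r)/2) < Vm t powr ((1-r)/2)" using big r rho2 by (intro powr_less_mono2) auto
      thus False using A by linarith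
    qed
    have l1: "\<forall>\<tau>\<in>{0..t/2}. Vm \<tau> \<ge> rho^2" using all t by (auto intro: less_imp_le)
    have l2: "\<forall>\<tau>\<in>{t/2..t}. Vm \<tau> \<ge> rho^2" using all t by (auto intro: less_imp_le)
    have h1: "-(Vm (t/2) powr ((1-s)/2)) \<le> -(Vm 0 powr ((1-s)/2)) - ((s-1)*k/2) * (t/2 - 0)"
      by (rule PS[OF _ _ l1]) (use t in auto)
    have h2: "Vm t powr ((1-r)/2) \<le> Vm (t/2) powr ((1-r)/2) - ((1-r)*k/4) * (t - t/2)"
      by (rule PR[OF _ _ l2]) (use t in auto)
    have "Vm 0 > rho^2" "Vm (t/2) > rho^2" "Vm t > rho^2" using all t by auto
    hence v: "Vm 0 > 0" "Vm (t/2) > 0" "Vm t > 0" using rho2 by linarith+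
    have "sqrt (Vm t) \<le> bet ((1-r)*k/4) ((s-1)*k/2) r s (sqrt (Vm 0)) t"
      by (rule final_alg[OF v _ s r t h1 h2]) (use s k in auto)
    thus ?thesis by (simp add: Vm_def)
  qed
qed



lemma zs_nonneg: assumes "w \<ge> 0" shows "zs ms s w \<tau> \<ge> 0"
  unfolding zs_def using assms by simp

lemma zs_den_ge1:
  fixes w ms \<tau> s :: real
  assumes "w \<ge> 0" "ms \<ge> 0" "\<tau> \<ge> 0" "s > 1"
  shows "(1 + ms * \<tau> * w powr (s - 1)) powr (1 / (s - 1)) \<ge> 1"
proof -
  have "1 \<le> 1 + ms * \<tau> * w powr (s - 1)" using assms by simp
  moreover have "0 \<le> 1 / (s - 1)" using assms by simp
  ultimately show ?thesis using ge_one_powr_ge_zero by blast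
qed

lemma zs_le: assumes "w \<ge> 0" "ms \<ge> 0" "\<tau> \<ge> 0" "s > 1" shows "zs ms s w \<tau> \<le> w"
proof -
  have D: "(1 + ms * \<tau> * w powr (s - 1)) powr (1 / (s - 1)) \<ge> 1" by (rule zs_den_ge1[OF assms])
  have "w / (1 + ms * \<tau> * w powr (s - 1)) powr (1 / (s - 1)) \<le> w / 1"
    using D assms by (intro divide_left_mono) auto
  thus ?thesis by (simp add: zs_def)
qed

lemma zs_anti:
  assumes "w \<ge> 0" "ms \<ge> 0" "0 \<le> \<tau>1" "\<tau>1 \<le> \<tau>2" "s > 1"
  shows "zs ms s w \<tau>2 \<le> zs ms s w \<tau>1"
proof -
  have b: "1 + ms * \<tau>1 * w powr (s - 1) \<le> 1 + ms * \<tau>2 * w powr (s - 1)"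
    using assms by (intro add_left_mono mult_right_mono mult_left_mono) auto
  have "(1 + ms * \<tau>1 * w powr (s - 1)) powr (1 / (s - 1)) \<le> (1 + ms * \<tau>2 * w powr (s - 1)) powr (1 / (s - 1))"
    using b assms by (intro powr_mono2) auto
  moreover have "(1 + ms * \<tau>1 * w powr (s - 1)) powr (1 / (s - 1)) \<ge> 1"
    using assms by (intro zs_den_ge1) auto
  ultimately show ?thesis unfolding zs_def using assms
    by (intro divide_left_mono) (auto intro!: mult_pos_pos)
qed

lemma zs_le1:
  assumes "w \<ge> 0" "ms * \<tau> \<ge> 1" "s > 1"
  shows "zs ms s w \<tau> \<le> 1"
proof (cases "w \<le> 1")
  case True
  have "ms \<ge> 0 \<and> \<tau> \<ge> 0 \<or> ms \<le> 0 \<and> \<tau> \<le> 0" using assms(2)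
    by (smt (verit) mult_nonneg_nonpos mult_nonpos_nonneg)
  hence "1 + ms * \<tau> * w powr (s - 1) \<ge> 1" using assms
    by (auto intro!: mult_nonneg_nonneg)
  hence "(1 + ms * \<tau> * w powr (s - 1)) powr (1 / (s - 1)) \<ge> 1"
    using assms by (intro ge_one_powr_ge_zero) auto
  hence "zs ms s w \<tau> \<le> w / 1" unfolding zs_def using assms by (intro divide_left_mono) auto
  thus ?thesis using True by simp
next
  case False
  hence w: "w > 1" by simp
  have "ms * \<tau> * w powr (s - 1) \<ge> 1 * w powr (s - 1)"
    using assms by (intro mult_right_mono) auto
  hence B: "1 + ms * \<tau> * w powr (s - 1) > w powr (s - 1)" by simp
  have "(w powr (s - 1)) powr (1 / (s - 1)) < (1 + ms * \<tau> * w powr (s - 1)) powr (1 / (s - 1))"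
    using B assms by (intro powr_less_mono2) auto
  moreover have "(w powr (s - 1)) powr (1 / (s - 1)) = w" using w assms by (simp add: powr_powr)
  ultimately have "w < (1 + ms * \<tau> * w powr (s - 1)) powr (1 / (s - 1))" by simp
  hence "w / (1 + ms * \<tau> * w powr (s - 1)) powr (1 / (s - 1)) \<le> 1" using w by (simp add: divide_le_eq)
  thus ?thesis unfolding zs_def .
qed


lemma bet_nonneg: "bet mr ms r s w t \<ge> 0"
  by (simp add: bet_def)

lemma bet_zero_time:
  assumes "w \<ge> 0" "r < 1"
  shows "bet mr ms r s w 0 = w"
proof -
  have "zs ms s w 0 = w" by (simp add: zs_def)
  moreover have "(w powr (1 - r)) powr (1 / (1 - r)) = w"
    using assms by (simp add: powr_powr)
  ultimately show ?thesis by (simp add: bet_def)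
qed

lemma bet_anti:
  assumes "w \<ge> 0" "ms \<ge> 0" "mr \<ge> 0" "0 \<le> t1" "t1 \<le> t2" "s > 1" "r < 1"
  shows "bet mr ms r s w t2 \<le> bet mr ms r s w t1"
proof -
  have "zs ms s w (t2/2) \<le> zs ms s w (t1/2)" using assms by (intro zs_anti) auto
  hence "zs ms s w (t2/2) powr (1 - r) \<le> zs ms s w (t1/2) powr (1 - r)"
    using assms zs_nonneg[OF assms(1)] by (intro powr_mono2) auto
  moreover have "mr * t1 / 2 \<le> mr * t2 / 2" using assms by (simp add: mult_left_mono)
  ultimately have "max 0 (zs ms s w (t2/2) powr (1 - r) - mr * t2 / 2) \<le> max 0 (zs ms s w (t1/2) powr (1 - r) - mr * t1 / 2)"
    by simp
  thus ?thesis unfolding bet_def using assms by (intro powr_mono2) auto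
qed

lemma bet_vanish:
  assumes w: "w \<ge> 0" and mr: "mr > 0" and ms: "ms > 0" and r: "0 < r" "r < 1" and s: "s > 1"
    and t: "t \<ge> min (2 * w powr (1 - r) / mr) (2 * max (1/ms) (1/mr))"
  shows "bet mr ms r s w t = 0"
proof -
  have t0: "t \<ge> 0" using t mr ms by (smt (verit) divide_nonneg_pos max.cobounded2 powr_ge_zero)
  have "zs ms s w (t/2) powr (1 - r) \<le> mr * t / 2"
  proof (cases "t \<ge> 2 * w powr (1 - r) / mr")
    case True
    have "zs ms s w (t/2) powr (1 - r) \<le> w powr (1 - r)"
      using zs_le[of w ms "t/2" s] zs_nonneg[OF w] w ms t0 s r by (intro powr_mono2) auto
    also have "\<dots> \<le> mr * t / 2" using True mr by (simp add: field_simps)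
    finally show ?thesis .
  next
    case False
    hence tt: "t \<ge> 2 * max (1/ms) (1/mr)" using t by linarith
    hence "t \<ge> 2 / ms" "t \<ge> 2 / mr" by auto
    hence m1: "ms * (t/2) \<ge> 1" "mr * t / 2 \<ge> 1" using ms mr by (auto simp: field_simps)
    have "zs ms s w (t/2) \<le> 1" by (rule zs_le1[OF w m1(1) s])
    hence "zs ms s w (t/2) powr (1 - r) \<le> 1 powr (1 - r)"
      using zs_nonneg[OF w] r by (intro powr_mono2) auto
    thus ?thesis using m1 by simp
  qed
  thus ?thesis by (simp add: bet_def)
qed

lemma bet_cont:
  assumes c2: "c2 \<ge> 0" and ms: "ms \<ge> 0" and s: "s > 1" and r: "r < 1"
  shows "continuous_on ({0..} \<times> {0..}) (\<lambda>z. bet mr ms r s (c2 * fst z) (snd z))"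
  unfolding bet_def zs_def
  apply (intro continuous_on_powr' continuous_intros)
  using c2 ms s r apply (auto simp: mult_nonneg_nonneg)
  by (smt (verit) c2 divide_nonneg_nonneg ms mult_nonneg_nonneg powr_ge_zero)


lemma beta_KL:
  assumes mr: "mr > 0" and ms: "ms > 0" and r: "0 < r" "r < 1" and s: "s > 1"
    and c1: "c1 > 0" and c2: "c2 > 0"
  shows "classKL_FxT (\<lambda>w t. c1 * bet mr ms r s (c2 * w) t)"
  unfolding classKL_FxT_def
proof (intro conjI allI impI)
  show "continuous_on ({0..} \<times> {0..}) (\<lambda>z. c1 * bet mr ms r s (c2 * fst z) (snd z))"
    using bet_cont[of c2 ms s r mr] c2 ms s r by (intro continuous_on_mult_left) auto
next
  fix w t :: real assume "w \<ge> 0" "t \<ge> 0"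
  show "0 \<le> c1 * bet mr ms r s (c2 * w) t" using c1 bet_nonneg by (simp add: mult_nonneg_nonneg)
next
  have eq: "c1 * bet mr ms r s (c2 * w) 0 = c1 * c2 * w" if "w \<ge> 0" for w
    using bet_zero_time[of "c2 * w" r mr ms s] that c2 r by simp
  show "classK (\<lambda>w. c1 * bet mr ms r s (c2 * w) 0)"
    unfolding classK_def
  proof (intro conjI allI impI)
    have "continuous_on {0..} (\<lambda>w::real. c1 * c2 * w)" by (intro continuous_intros)
    thus "continuous_on {0..} (\<lambda>w. c1 * bet mr ms r s (c2 * w) 0)"
      by (rule continuous_on_eq) (metis atLeast_iff eq)
    show "strict_mono_on {0..} (\<lambda>w. c1 * bet mr ms r s (c2 * w) 0)"
      by (rule strict_mono_onI) (use eq c1 c2 in auto)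
    show "c1 * bet mr ms r s (c2 * 0) 0 = 0" using eq[of 0] by simp
    fix w :: real assume "w \<ge> 0"
    thus "0 \<le> c1 * bet mr ms r s (c2 * w) 0" using eq c1 c2 by simp
  qed
next
  fix w :: real assume w: "w \<ge> 0"
  have "continuous_on {0..} (\<lambda>t. (\<lambda>z. bet mr ms r s (c2 * fst z) (snd z)) (w, t))"
    by (rule continuous_on_compose2[OF bet_cont[of c2 ms s r mr]]) (use c2 ms s r w in \<open>auto intro!: continuous_intros\<close>)
  hence "continuous_on {0..} (\<lambda>t. c1 * bet mr ms r s (c2 * w) t)"
    by (intro continuous_on_mult_left) simp
  thus "continuous_on {0..} (\<lambda>t. c1 * bet mr ms r s (c2 * w) t)" .
  fix a b :: real assume ab: "0 \<le> a" "a \<le> b"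
  show "c1 * bet mr ms r s (c2 * w) b \<le> c1 * bet mr ms r s (c2 * w) a"
    using bet_anti[of "c2 * w" ms mr a b s r] ab w c1 c2 ms mr s r by (intro mult_left_mono) auto
next
  define T where "T w = min (2 * (c2 * w) powr (1 - r) / mr) (2 * max (1/ms) (1/mr))" for w
  have T2: "2 * max (1/ms) (1/mr) > 0" using ms by (simp add: max.strict_coboundedI1)
  show "\<exists>T. continuous_on {0..} T \<and> (\<forall>r\<ge>0. 0 \<le> T r) \<and> bounded (T ` {0..}) \<and> T 0 = 0 \<and>
        (\<forall>w\<ge>0. \<forall>t\<ge>T w. c1 * bet mr ms r s (c2 * w) t = 0)"
  proof (intro exI[of _ T] conjI allI impI)
    show "continuous_on {0..} T" unfolding T_def
      using c2 r mr by (intro continuous_on_powr' continuous_intros) auto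
    fix w :: real assume "w \<ge> 0"
    thus "0 \<le> T w" unfolding T_def using mr T2 c2 by auto
  next
    have "\<forall>x\<in>T ` {0..}. norm x \<le> 2 * max (1/ms) (1/mr)"
      unfolding T_def using mr T2 c2 by auto
    thus "bounded (T ` {0..})" by (auto simp: bounded_iff)
  next
    show "T 0 = 0" unfolding T_def using T2 r by simp
  next
    fix w t :: real assume "w \<ge> 0" "T w \<le> t"
    thus "c1 * bet mr ms r s (c2 * w) t = 0"
      using bet_vanish[of "c2 * w" mr ms r s t] mr ms r s c2 by (simp add: T_def)
  qed
qed

lemma rho_K:
  fixes A B e :: real
  assumes "A > 0" "B > 0" "e > 0"
  shows "classK (\<lambda>v. A * (B * v) powr e)"
  unfolding classK_def
proof (intro conjI allI impI)
  show "continuous_on {0..} (\<lambda>v. A * (B * v) powr e)"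
    using assms by (intro continuous_on_powr' continuous_intros) auto
  show "strict_mono_on {0..} (\<lambda>v. A * (B * v) powr e)"
    by (rule strict_mono_onI) (use assms in \<open>auto intro!: powr_less_mono2\<close>)
  show "A * (B * 0) powr e = 0" by simp
  fix v :: real show "v \<ge> 0 \<Longrightarrow> 0 \<le> A * (B * v) powr e" using assms by simp
qed


lemma vd_chain_matrix:
  fixes th :: "real \<Rightarrow> real^'m" and g :: "real^'m \<Rightarrow> real^'n" and J :: "real^'m^'n"
  assumes "(th has_vector_derivative v) (at t within S)" "(g has_derivative (\<lambda>d. J *v d)) (at (th t))"
  shows "((\<lambda>s. g (th s)) has_vector_derivative (J *v v)) (at t within S)"
proof -
  have "((g \<circ> th) has_derivative ((\<lambda>d. J *v d) \<circ> (\<lambda>h. h *\<^sub>R v))) (at t within S)"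
    by (rule diff_chain_within[OF assms(1)[unfolded has_vector_derivative_def] has_derivative_at_withinI[OF assms(2)]])
  moreover have "((\<lambda>d. J *v d) \<circ> (\<lambda>h. h *\<^sub>R v)) = (\<lambda>h. h *\<^sub>R (J *v v))"
    by (auto simp: o_def linear_cmul[OF matrix_vector_mul_linear])
  ultimately show ?thesis unfolding has_vector_derivative_def o_def by simp
qed

lemma vderiv_quot:
  fixes f :: "real \<Rightarrow> 'a::real_normed_vector"
  assumes "(f has_vector_derivative F) (at t within {0..})" "t \<ge> 0"
  shows "((\<lambda>y. norm (f y - f t) / (y - t)) \<longlongrightarrow> norm F) (at_right t)"
proof -
  from assms(1) have "((\<lambda>y. (1/norm(y-t)) *\<^sub>R (f y - (f t + (y-t) *\<^sub>R F))) \<longlongrightarrow> 0) (at t within {0..})"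
    unfolding has_vector_derivative_def has_derivative_within by blast
  hence "((\<lambda>y. (1/norm(y-t)) *\<^sub>R (f y - (f t + (y-t) *\<^sub>R F))) \<longlongrightarrow> 0) (at_right t)"
    by (rule tendsto_within_subset) (use assms(2) in auto)
  hence "((\<lambda>y. (1/norm(y-t)) *\<^sub>R (f y - (f t + (y-t) *\<^sub>R F)) + F) \<longlongrightarrow> 0 + F) (at_right t)"
    by (intro tendsto_add tendsto_const)
  moreover have "eventually (\<lambda>y. (1/norm(y-t)) *\<^sub>R (f y - (f t + (y-t) *\<^sub>R F)) + F = (1/(y-t)) *\<^sub>R (f y - f t)) (at_right t)"
    using eventually_at_right_less[of t]
  proof (rule eventually_mono)
    fix y assume y: "t < y"
    have "(1/norm(y-t)) *\<^sub>R (f y - (f t + (y-t) *\<^sub>R F)) = (1/(y-t)) *\<^sub>R (f y - f t) - (1/(y-t)) *\<^sub>R ((y-t) *\<^sub>R F)"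
      using y by (simp add: algebra_simps)
    also have "(1/(y-t)) *\<^sub>R ((y-t) *\<^sub>R F) = F" using y by simp
    finally show "(1/norm(y-t)) *\<^sub>R (f y - (f t + (y-t) *\<^sub>R F)) + F = (1/(y-t)) *\<^sub>R (f y - f t)" by simp
  qed
  ultimately have "((\<lambda>y. (1/(y-t)) *\<^sub>R (f y - f t)) \<longlongrightarrow> F) (at_right t)"
    by (simp add: tendsto_cong)
  hence "((\<lambda>y. norm ((1/(y-t)) *\<^sub>R (f y - f t))) \<longlongrightarrow> norm F) (at_right t)"
    by (rule tendsto_norm)
  moreover have "eventually (\<lambda>y. norm ((1/(y-t)) *\<^sub>R (f y - f t)) = norm (f y - f t) / (y - t)) (at_right t)"
    using eventually_at_right_less[of t] by (rule eventually_mono) simp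
  ultimately show ?thesis by (rule Lim_transform_eventually)
qed

lemma vderiv_lip:
  fixes f :: "real \<Rightarrow> 'a::real_normed_vector" and g :: "real \<Rightarrow> 'b::real_normed_vector"
  assumes "(f has_vector_derivative F) (at t within {0..})" "(g has_vector_derivative G) (at t within {0..})"
    and "t \<ge> 0" and lip: "\<And>y. norm (f y - f t) \<le> c * norm (g y - g t)"
  shows "norm F \<le> c * norm G"
proof (rule tendsto_le[OF trivial_limit_at_right_real])
  show "((\<lambda>y. norm (f y - f t) / (y - t)) \<longlongrightarrow> norm F) (at_right t)" by (rule vderiv_quot[OF assms(1,3)])
  show "((\<lambda>y. c * (norm (g y - g t) / (y - t))) \<longlongrightarrow> c * norm G) (at_right t)"
    by (intro tendsto_mult tendsto_const vderiv_quot[OF assms(2,3)])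
  show "eventually (\<lambda>y. norm (f y - f t) / (y - t) \<le> c * (norm (g y - g t) / (y - t))) (at_right t)"
    using eventually_at_right_less[of t]
  proof (rule eventually_mono)
    fix y assume "t < y"
    thus "norm (f y - f t) / (y - t) \<le> c * (norm (g y - g t) / (y - t))"
      using lip[of y] divide_right_mono[of "norm (f y - f t)" "c * norm (g y - g t)" "y - t"] by simp
  qed
qed

lemma deriv_inner_self:
  fixes y :: "real \<Rightarrow> 'a::real_inner"
  assumes "(y has_vector_derivative Y) (at t within S)"
  shows "((\<lambda>s. inner (y s) (y s)) has_real_derivative 2 * inner (y t) Y) (at t within S)"
proof -
  have d: "(y has_derivative (\<lambda>h. h *\<^sub>R Y)) (at t within S)"
    using assms by (simp add: has_vector_derivative_def)
  have "((\<lambda>s. inner (y s) (y s)) has_derivative (\<lambda>h. inner (y t) (h *\<^sub>R Y) + inner (h *\<^sub>R Y) (y t))) (at t within S)"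
    by (rule has_derivative_inner[OF d d])
  moreover have "(\<lambda>h. inner (y t) (h *\<^sub>R Y) + inner (h *\<^sub>R Y) (y t)) = (\<lambda>h. (2 * inner (y t) Y) * h)"
    by (auto simp: inner_commute algebra_simps)
  ultimately show ?thesis unfolding has_field_derivative_def by simp
qed

lemma pow_comb:
  fixes w al a1 b1 be :: real
  assumes "w \<ge> 0" "al \<le> a1" "a1 \<le> b1" "b1 \<le> be"
  shows "w powr a1 + w powr b1 \<le> 2 * (w powr al + w powr be)"
proof (cases "w \<le> 1")
  case True
  have "w powr b1 \<le> w powr a1" "w powr a1 \<le> w powr al" using assms True by (auto intro: powr_mono')
  moreover have "w powr be \<ge> 0" by (rule powr_ge_zero)
  ultimately have "w powr a1 + w powr b1 \<le> 2 * w powr al + 2 * w powr be" by linarith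
  thus ?thesis by (simp add: distrib_left)
next
  case False
  have "w powr a1 \<le> w powr b1" "w powr b1 \<le> w powr be" using assms False by (auto intro: powr_mono)
  moreover have "w powr al \<ge> 0" by (rule powr_ge_zero)
  ultimately have "w powr a1 + w powr b1 \<le> 2 * w powr al + 2 * w powr be" by linarith
  thus ?thesis by (simp add: distrib_left)
qed
lemma zs_alt:
  assumes w: "w > 0" and s: "s > 1" and ms: "ms \<ge> 0" and t: "\<tau> \<ge> 0"
  shows "zs ms s w \<tau> = (w powr (1 - s) + ms * \<tau>) powr (- (1 / (s - 1)))"
proof -
  have inv: "w powr (1-s) * w powr (s-1) = 1" using w by (simp add: powr_add[symmetric])
  have eq: "w powr (1-s) + ms * \<tau> = w powr (1-s) * (1 + ms * \<tau> * w powr (s - 1))"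
    using inv by (simp add: algebra_simps)
  have Q: "1 + ms * \<tau> * w powr (s - 1) > 0" using ms t by (simp add: add_pos_nonneg)
  have "(w powr (1 - s) + ms * \<tau>) powr (- (1 / (s - 1))) = (w powr (1-s)) powr (- (1 / (s - 1))) * (1 + ms * \<tau> * w powr (s - 1)) powr (- (1 / (s - 1)))"
    unfolding eq using w Q by (simp add: powr_mult)
  also have ex: "(1-s) * (- (1 / (s - 1))) = 1" using s by (simp add: field_simps)
  have "(w powr (1-s)) powr (- (1 / (s - 1))) = w"
    using w by (simp only: powr_powr ex powr_one_gt_zero_iff)
  finally show ?thesis unfolding zs_def using Q by (simp add: powr_minus_divide)
qed

lemma zs_mono:
  assumes "0 \<le> w1" "w1 \<le> w2" "s > 1" "ms \<ge> 0" "\<tau> \<ge> 0"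
  shows "zs ms s w1 \<tau> \<le> zs ms s w2 \<tau>"
proof (cases "w1 = 0")
  case True thus ?thesis using zs_nonneg[of w2] assms by (simp add: zs_def)
next
  case False
  hence w1: "w1 > 0" using assms by simp
  have "w2 powr (1 - s) \<le> w1 powr (1 - s)" using w1 assms by (intro powr_mono2') auto
  moreover have "0 < w2 powr (1 - s) + ms * \<tau>" using w1 assms by (intro add_pos_nonneg) auto
  ultimately have "(w1 powr (1 - s) + ms * \<tau>) powr (- (1 / (s - 1))) \<le> (w2 powr (1 - s) + ms * \<tau>) powr (- (1 / (s - 1)))"
    using assms by (intro powr_mono2') auto
  moreover have "zs ms s w1 \<tau> = (w1 powr (1 - s) + ms * \<tau>) powr (- (1 / (s - 1)))"
    using w1 assms by (intro zs_alt) auto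
  moreover have "zs ms s w2 \<tau> = (w2 powr (1 - s) + ms * \<tau>) powr (- (1 / (s - 1)))"
    using w1 assms by (intro zs_alt) auto
  ultimately show ?thesis by simp
qed

lemma bet_mono_w:
  assumes "0 \<le> w1" "w1 \<le> w2" "s > 1" "ms \<ge> 0" "t \<ge> 0" "r < 1"
  shows "bet mr ms r s w1 t \<le> bet mr ms r s w2 t"
proof -
  have "zs ms s w1 (t/2) \<le> zs ms s w2 (t/2)" using assms by (intro zs_mono) auto
  hence "zs ms s w1 (t/2) powr (1 - r) \<le> zs ms s w2 (t/2) powr (1 - r)"
    using assms zs_nonneg[OF assms(1)] by (intro powr_mono2) auto
  thus ?thesis unfolding bet_def using assms by (intro powr_mono2) auto
qed


lemma core1:
  fixes Y fx hd :: "'a::real_inner" and a p q k r s Hb P :: real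
  assumes A: "inner Y fx \<le> -(a/2) * norm Y powr (2*p) - (a/2) * norm Y powr (2*q)"
    and hd: "norm hd \<le> Hb" and k: "k \<le> a/2" "k \<ge> 0"
    and e: "2*p \<le> 1+r" "r \<le> s" "1+s \<le> 2*q" and P: "2*Hb \<le> P"
  shows "2 * inner Y (fx - hd) \<le> -k * ((inner Y Y) powr ((1+r)/2) + (inner Y Y) powr ((1+s)/2)) + P * (inner Y Y) powr (1/2)"
proof -
  define W where "W = norm Y"
  have W0: "W \<ge> 0" by (simp add: W_def)
  have sq: "sqrt (inner Y Y) = W" by (simp add: W_def norm_eq_sqrt_inner)
  have pw: "(inner Y Y) powr (al/2) = W powr al" for al
    using powr_half_sq[of "inner Y Y" al] sq by simp
  have "inner Y hd \<ge> - (W * Hb)"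
  proof -
    have "- inner Y hd \<le> norm Y * norm hd" using norm_cauchy_schwarz[of Y "-hd"] by simp
    also have "\<dots> \<le> W * Hb" using hd W0 by (simp add: W_def mult_left_mono)
    finally show ?thesis by simp
  qed
  hence "2 * inner Y (fx - hd) \<le> -a * (W powr (2*p) + W powr (2*q)) + 2 * Hb * W"
    using A by (simp add: inner_diff_right W_def algebra_simps)
  also have "-a * (W powr (2*p) + W powr (2*q)) \<le> -k * (W powr (1+r) + W powr (1+s))"
  proof -
    have "W powr (1+r) + W powr (1+s) \<le> 2 * (W powr (2*p) + W powr (2*q))"
      using W0 e by (intro pow_comb) auto
    hence "k * (W powr (1+r) + W powr (1+s)) \<le> k * (2 * (W powr (2*p) + W powr (2*q)))"
      using k by (intro mult_left_mono) auto
    also have "\<dots> \<le> (a/2) * (2 * (W powr (2*p) + W powr (2*q)))"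
      using k by (intro mult_right_mono) auto
    finally have "k * (W powr (1+r) + W powr (1+s)) \<le> (a/2) * (2 * (W powr (2*p) + W powr (2*q)))" .
    moreover have "(a/2) * (2 * (W powr (2*p) + W powr (2*q))) = a * (W powr (2*p) + W powr (2*q))" by simp
    ultimately show ?thesis by linarith
  qed
  also have "2 * Hb * W \<le> P * W" using P W0 by (intro mult_right_mono) auto
  finally show ?thesis
    using pw[of "1+r"] pw[of "1+s"] pw[of 1] W0 by simp
qed

lemma core2_conv:
  fixes D B \<gamma> ca cb \<kappa> k r s xi1 xi2 Mv P :: real
  assumes D: "D \<le> -2*\<gamma>^2*(ca * B powr (2-xi1) + cb * B powr (2-xi2)) + 2*\<gamma>^2*Mv*B"
    and B: "B \<ge> 0" and g: "\<gamma> > 0"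
    and ka: "\<kappa> \<le> 2*\<gamma>^2*ca / \<gamma> powr (2-xi1)" and kb: "\<kappa> \<le> 2*\<gamma>^2*cb / \<gamma> powr (2-xi2)"
    and k: "0 \<le> k" "k \<le> \<kappa>/2"
    and e: "2-xi1 \<le> 1+r" "r \<le> s" "1+s \<le> 2-xi2" and P: "2*\<gamma>*Mv \<le> P"
  shows "D \<le> -k*((\<gamma>^2*B^2) powr ((1+r)/2) + (\<gamma>^2*B^2) powr ((1+s)/2)) + P*(\<gamma>^2*B^2) powr (1/2)"
proof -
  define W where "W = \<gamma> * B"
  have W0: "W \<ge> 0" using B g by (simp add: W_def)
  have sq: "sqrt (\<gamma>^2*B^2) = W" using B g by (simp add: W_def real_sqrt_mult)
  have pw: "(\<gamma>^2*B^2) powr (al/2) = W powr al" for al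
    using powr_half_sq[of "\<gamma>^2*B^2" al] sq by simp
  have Wp: "W powr al = \<gamma> powr al * B powr al" for al
    using B g by (simp add: W_def powr_mult)
  have t1: "\<kappa> * W powr (2-xi1) \<le> 2*\<gamma>^2*ca * B powr (2-xi1)"
  proof -
    have "\<kappa> * W powr (2-xi1) \<le> (2*\<gamma>^2*ca / \<gamma> powr (2-xi1)) * (\<gamma> powr (2-xi1) * B powr (2-xi1))"
      unfolding Wp by (rule mult_right_mono[OF ka]) simp
    also have "\<dots> = 2*\<gamma>^2*ca * B powr (2-xi1)" using g by simp
    finally show ?thesis .
  qed
  have t2: "\<kappa> * W powr (2-xi2) \<le> 2*\<gamma>^2*cb * B powr (2-xi2)"
  proof -
    have "\<kappa> * W powr (2-xi2) \<le> (2*\<gamma>^2*cb / \<gamma> powr (2-xi2)) * (\<gamma> powr (2-xi2) * B powr (2-xi2))"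
      unfolding Wp by (rule mult_right_mono[OF kb]) simp
    also have "\<dots> = 2*\<gamma>^2*cb * B powr (2-xi2)" using g by simp
    finally show ?thesis .
  qed
  have "W powr (1+r) + W powr (1+s) \<le> 2 * (W powr (2-xi1) + W powr (2-xi2))"
    using W0 e by (intro pow_comb) auto
  hence "k * (W powr (1+r) + W powr (1+s)) \<le> k * (2 * (W powr (2-xi1) + W powr (2-xi2)))"
    using k by (intro mult_left_mono) auto
  also have "\<dots> \<le> (\<kappa>/2) * (2 * (W powr (2-xi1) + W powr (2-xi2)))"
    using k by (intro mult_right_mono) auto
  also have "\<dots> = \<kappa> * W powr (2-xi1) + \<kappa> * W powr (2-xi2)" by (simp add: algebra_simps)
  finally have K1: "k * (W powr (1+r) + W powr (1+s)) \<le> 2*\<gamma>^2*(ca * B powr (2-xi1) + cb * B powr (2-xi2))"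
    using t1 t2 by (simp add: algebra_simps)
  have K2: "2*\<gamma>^2*Mv*B \<le> P * W"
  proof -
    have "2*\<gamma>^2*Mv*B = (2*\<gamma>*Mv) * W" by (simp add: W_def power2_eq_square)
    also have "\<dots> \<le> P * W" using P W0 by (intro mult_right_mono) auto
    finally show ?thesis .
  qed
  have "D \<le> -k * (W powr (1+r) + W powr (1+s)) + P * W" using D K1 K2 by linarith
  thus ?thesis using pw[of "1+r"] pw[of "1+s"] pw[of 1] W0 by simp
qed


lemma core2:
  fixes E g g0 ud :: "'a::real_inner" and B \<mu> L K c \<delta> \<Lambda> xi1 xi2 Mv \<gamma> :: real
  assumes B: "B > 0" "norm E = B"
    and g0E: "inner g0 E \<ge> \<mu> * B^2" and g0n: "norm g0 \<le> L * B"
    and gg0: "norm (g - g0) \<le> c * B"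
    and \<delta>: "\<delta> = \<mu> - c" "\<delta> > 0" and \<Lambda>: "\<Lambda> = L + c"
    and xi: "xi1 > 0" "xi2 < 0"
    and ud: "norm ud \<le> Mv"
  shows "\<gamma>^2 * (2 * inner E (- phi_xi xi1 xi2 g - ud)) \<le>
    -2*\<gamma>^2*(\<delta> * \<Lambda> powr (-xi1) * B powr (2-xi1) + \<delta> powr (1-xi2) * B powr (2-xi2)) + 2*\<gamma>^2*Mv*B"
proof -
  have cs: "\<bar>inner (g - g0) E\<bar> \<le> c * B * B"
  proof -
    have "\<bar>inner (g - g0) E\<bar> \<le> norm (g - g0) * norm E" by (rule Cauchy_Schwarz_ineq2)
    also have "\<dots> \<le> c * B * B" using gg0 B by (simp add: mult_right_mono)
    finally show ?thesis .
  qed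
  have gE: "inner g E \<ge> \<delta> * B^2"
  proof -
    have "inner g E = inner g0 E + inner (g - g0) E" by (simp add: inner_diff_left)
    moreover have "\<delta> * B^2 = \<mu> * B^2 - c * B * B" using \<delta>(1) by (simp add: power2_eq_square left_diff_distrib)
    moreover have "inner (g - g0) E \<ge> - (c * B * B)" using cs by linarith
    ultimately show ?thesis using g0E by linarith
  qed
  have gup: "norm g \<le> \<Lambda> * B"
  proof -
    have "norm g \<le> norm g0 + norm (g - g0)" using norm_triangle_ineq[of g0 "g - g0"] by simp
    thus ?thesis using g0n gg0 \<Lambda> by (simp add: algebra_simps)
  qed
  have glo: "\<delta> * B \<le> norm g"
  proof -
    have a1: "\<delta> * B * B \<le> inner g E" using gE by (simp add: power2_eq_square mult.assoc)
    have a2: "inner g E \<le> norm g * B" using norm_cauchy_schwarz[of g E] B by simp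
    have "\<delta> * B * B \<le> norm g * B" using a1 a2 by linarith
    thus ?thesis using B by (simp add: mult_le_cancel_right)
  qed
  have dB: "\<delta> * B > 0" using \<delta> B by simp
  hence gpos: "norm g > 0" using glo by linarith
  hence g0': "g \<noteq> 0" by auto
  have Lp: "\<Lambda> * B > 0" using gup gpos by linarith
  have phi: "inner E (phi_xi xi1 xi2 g) = (norm g powr (-xi1) + norm g powr (-xi2)) * inner g E"
    using g0' by (simp add: phi_xi_def inner_add_right powr_minus_divide inner_commute algebra_simps)
  have l1: "norm g powr (-xi1) \<ge> (\<Lambda> * B) powr (-xi1)"
    using gup gpos xi by (intro powr_mono2') auto
  have l2: "norm g powr (-xi2) \<ge> (\<delta> * B) powr (-xi2)"
    using glo dB xi by (intro powr_mono2) auto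
  have "((\<Lambda> * B) powr (-xi1) + (\<delta> * B) powr (-xi2)) * (\<delta> * B^2) \<le>
        (norm g powr (-xi1) + norm g powr (-xi2)) * inner g E"
    using l1 l2 gE dB B \<delta> by (intro mult_mono add_mono) auto
  also have "((\<Lambda> * B) powr (-xi1) + (\<delta> * B) powr (-xi2)) * (\<delta> * B^2) =
      \<delta> * \<Lambda> powr (-xi1) * B powr (2-xi1) + \<delta> powr (1-xi2) * B powr (2-xi2)"
  proof -
    have e1: "B powr (2 - xi1) = B powr (-xi1) * B^2" using powr_add[of B "-xi1" 2] B by simp
    have e2: "B powr (2 - xi2) = B powr (-xi2) * B^2" using powr_add[of B "-xi2" 2] B by simp
    have e3: "\<delta> powr (1 - xi2) = \<delta> powr (-xi2) * \<delta>" using powr_add[of \<delta> "-xi2" 1] \<delta> by simp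
    show ?thesis using B \<delta> Lp
      by (simp add: powr_mult e1 e2 e3 algebra_simps)
  qed
  finally have main: "\<delta> * \<Lambda> powr (-xi1) * B powr (2-xi1) + \<delta> powr (1-xi2) * B powr (2-xi2) \<le> inner E (phi_xi xi1 xi2 g)"
    using phi by simp
  have "- inner E ud \<le> B * Mv"
    using norm_cauchy_schwarz[of E "-ud"] ud B by (simp add: mult_left_mono) (smt (verit) mult_left_mono)
  hence "2 * inner E (- phi_xi xi1 xi2 g - ud) \<le> -2*(\<delta> * \<Lambda> powr (-xi1) * B powr (2-xi1) + \<delta> powr (1-xi2) * B powr (2-xi2)) + 2*Mv*B"
    using main by (simp add: inner_diff_right algebra_simps)
  hence "\<gamma>^2 * (2 * inner E (- phi_xi xi1 xi2 g - ud)) \<le> \<gamma>^2 * (-2*(\<delta> * \<Lambda> powr (-xi1) * B powr (2-xi1) + \<delta> powr (1-xi2) * B powr (2-xi2)) + 2*Mv*B)"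
    by (intro mult_left_mono) auto
  thus ?thesis by (simp add: algebra_simps)
qed


theorem theorem2:
  fixes f :: "real^'n::finite \<Rightarrow> real^'N::finite \<Rightarrow> real^'n"
    and phi :: "real^'m::finite \<Rightarrow> real^'n \<Rightarrow> real^'N \<Rightarrow> real"
    and gx :: "real^'m \<Rightarrow> real^'n \<Rightarrow> real^'N \<Rightarrow> real^'n"
    and gu :: "real^'m \<Rightarrow> real^'n \<Rightarrow> real^'N \<Rightarrow> real^'N"
    and h :: "real^'N \<Rightarrow> real^'n" and Jh :: "real^'N \<Rightarrow> real^'N^'n"
    and Pi :: "real^'m \<Rightarrow> real^'m" and Theta :: "(real^'m) set"
    and gradPhi :: "real^'m \<Rightarrow> real^'N \<Rightarrow> real^'N"
    and varphi :: "real^'m \<Rightarrow> real^'N" and Jvarphi :: "real^'m \<Rightarrow> real^'m^'N"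
    and xi1 xi2 eps0 \<gamma> ell a p q L \<mu> K :: real
  assumes f_cont: "continuous_on UNIV (\<lambda>z. f (fst z) (snd z))"
    and xi1: "0 < xi1" "xi1 < 1" and xi2: "xi2 < 0" and eps0_pos: "eps0 > 0"
    \<comment> \<open>phi_theta is C^1 in (x,u), with gradient (gx, gu)\<close>
    and phi_deriv: "\<And>\<theta> x u. ((\<lambda>z. phi \<theta> (fst z) (snd z)) has_derivative
          (\<lambda>z. gx \<theta> x u \<bullet> fst z + gu \<theta> x u \<bullet> snd z)) (at (x, u))"
    and gx_cont: "\<And>\<theta>. continuous_on UNIV (\<lambda>z. gx \<theta> (fst z) (snd z))"
    and gu_cont: "\<And>\<theta>. continuous_on UNIV (\<lambda>z. gu \<theta> (fst z) (snd z))"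
    \<comment> \<open>(A1)\<close>
    and h_deriv: "\<And>u. (h has_derivative (\<lambda>d. Jh u *v d)) (at u)"
    and Jh_cont: "continuous_on UNIV Jh"
    and h_lip: "ell-lipschitz_on UNIV h"
    and \<gamma>_pos: "\<gamma> > 0" and ell_pos: "ell > 0"
    and f_eq: "\<And>u. f (h u) u = 0"
    and a_pos: "a > 0" and p: "0 < p" "p < 1" and q: "q > 1"
    and A1: "\<And>x u uh. norm (x - h uh) \<ge> \<gamma> * norm (u - uh) \<Longrightarrow>
          (x - h uh) \<bullet> f x u \<le> - (a/2) * norm (x - h uh) powr (2*p) - (a/2) * norm (x - h uh) powr (2*q)"
    \<comment> \<open>(A2)\<close>
    and Pi_lip: "\<exists>C. C-lipschitz_on UNIV Pi"
    and Theta_compact: "compact Theta"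
    and Theta_inv: "\<And>th. th 0 \<in> Theta \<Longrightarrow>
          (\<forall>t\<ge>0. (th has_vector_derivative (eps0 *\<^sub>R Pi (th t))) (at t within {0..})) \<Longrightarrow>
          \<forall>t\<ge>0. th t \<in> Theta"
    \<comment> \<open>(A3), with Phi_theta(u) = phi_theta(h u, u)\<close>
    and Phi_deriv: "\<And>\<theta> u. ((\<lambda>v. phi \<theta> (h v) v) has_derivative (\<lambda>d. gradPhi \<theta> u \<bullet> d)) (at u)"
    and gradPhi_cont: "\<And>\<theta>. continuous_on UNIV (gradPhi \<theta>)"
    and L_pos: "L > 0" and \<mu>_pos: "\<mu> > 0"
    and Phi_smooth: "\<And>\<theta> u uh. norm (gradPhi \<theta> uh - gradPhi \<theta> u) \<le> L * norm (uh - u)"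
    and Phi_strconv: "\<And>\<theta> u uh. phi \<theta> (h uh) uh \<ge>
          phi \<theta> (h u) u + gradPhi \<theta> u \<bullet> (uh - u) + (\<mu>/2) * (norm (uh - u))\<^sup>2"
    and varphi_deriv: "\<And>\<theta>. (varphi has_derivative (\<lambda>d. Jvarphi \<theta> *v d)) (at \<theta>)"
    and Jvarphi_cont: "continuous_on UNIV Jvarphi"
    and varphi_argmin: "\<And>\<theta> u. phi \<theta> (h (varphi \<theta>)) (varphi \<theta>) \<le> phi \<theta> (h u) u"
    \<comment> \<open>(A4)\<close>
    and K_pos: "K > 0"
    and A4: "\<And>\<theta> x xh u. norm (Gmap Jh gx gu \<theta> xh u - Gmap Jh gx gu \<theta> x u) \<le> K * norm (xh - x)"
    and gain: "\<mu> > K * (ell + \<gamma>)"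
  shows "\<exists>\<beta> \<rho>. classKL_FxT \<beta> \<and> classK \<rho> \<and>
    (\<forall>(x :: real \<Rightarrow> real^'n) (u :: real \<Rightarrow> real^'N) (th :: real \<Rightarrow> real^'m).
       th 0 \<in> Theta \<and>
       (\<forall>t\<ge>0. (x has_vector_derivative f (x t) (u t)) (at t within {0..})
              \<and> (u has_vector_derivative - phi_xi xi1 xi2 (Gmap Jh gx gu (th t) (x t) (u t))) (at t within {0..})
              \<and> (th has_vector_derivative eps0 *\<^sub>R Pi (th t)) (at t within {0..}))
       \<longrightarrow> (\<forall>t\<ge>0. norm (x t - h (varphi (th t)), u t - varphi (th t))
             \<le> \<beta> (norm (x 0 - h (varphi (th 0)), u 0 - varphi (th 0))) t
                + \<rho> (SUP s\<in>{0..}. norm (eps0 *\<^sub>R Pi (th s)))))"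
  proof -
  obtain CPi where CPi: "CPi-lipschitz_on UNIV Pi" using Pi_lip by blast
  have Pi_cont: "continuous_on UNIV Pi" using lipschitz_on_continuous_on[OF CPi] .
  have Jh_bd: "norm (Jh w *v d) \<le> ell * norm d" for w d
  proof -
    have g1: "((\<lambda>\<tau>::real. w + \<tau> *\<^sub>R d) has_vector_derivative d) (at 0 within {0..})"
      by (auto intro!: derivative_eq_intros)
    have f1: "((\<lambda>\<tau>. h (w + \<tau> *\<^sub>R d)) has_vector_derivative (Jh w *v d)) (at 0 within {0..})"
      using vd_chain_matrix[OF g1 h_deriv[of "w + 0 *\<^sub>R d"]] by simp
    show ?thesis
    proof (rule vderiv_lip[OF f1 g1])
      fix y :: real
      have "dist (h (w + y *\<^sub>R d)) (h (w + 0 *\<^sub>R d)) \<le> ell * dist (w + y *\<^sub>R d) (w + 0 *\<^sub>R d)"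
        by (rule lipschitz_onD[OF h_lip]) auto
      thus "norm (h (w + y *\<^sub>R d) - h (w + 0 *\<^sub>R d)) \<le> ell * norm (w + y *\<^sub>R d - (w + 0 *\<^sub>R d))"
        by (simp add: dist_norm)
    qed simp
  qed
  have "compact (Jvarphi ` Theta)"
    using Theta_compact by (intro compact_continuous_image continuous_on_subset[OF Jvarphi_cont]) auto
  then obtain BJ where BJ: "\<And>A. A \<in> Jvarphi ` Theta \<Longrightarrow> norm A \<le> BJ"
    by (meson compact_imp_bounded bounded_iff)
  define MJ where "MJ = max 1 (real CARD('N) * real CARD('m) * BJ)"
  have MJ: "MJ > 0" by (simp add: MJ_def less_max_iff_disj)
  have MJb: "norm (Jvarphi \<theta> *v d) \<le> MJ * norm d" if "\<theta> \<in> Theta" for \<theta> d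
  proof -
    have c: "\<bar>Jvarphi \<theta> $ i $ j\<bar> \<le> BJ" for i j
    proof -
      have "\<bar>Jvarphi \<theta> $ i $ j\<bar> \<le> norm (Jvarphi \<theta> $ i)" by (rule component_le_norm_cart)
      also have "\<dots> \<le> norm (Jvarphi \<theta>)" by (rule Finite_Cartesian_Product.norm_nth_le)
      also have "\<dots> \<le> BJ" using BJ that by blast
      finally show ?thesis .
    qed
    have "norm (Jvarphi \<theta> *v d) \<le> onorm ((*v) (Jvarphi \<theta>)) * norm d"
      by (rule onorm[OF matrix_vector_mul_bounded_linear])
    also have "onorm ((*v) (Jvarphi \<theta>)) \<le> real CARD('N) * real CARD('m) * BJ"
      by (rule onorm_le_matrix_component) (use c in auto)
    hence "onorm ((*v) (Jvarphi \<theta>)) * norm d \<le> MJ * norm d"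
      by (intro mult_right_mono) (auto simp: MJ_def)
    finally show ?thesis .
  qed
  have G1: "gradPhi \<theta> w = Gmap Jh gx gu \<theta> (h w) w" for \<theta> w
  proof -
    have "((\<lambda>v. (h v, v)) has_derivative (\<lambda>d. (Jh w *v d, d))) (at w)"
      by (intro has_derivative_Pair h_deriv has_derivative_ident)
    from has_derivative_compose[OF this phi_deriv[of \<theta> "h w" w]]
    have "((\<lambda>v. phi \<theta> (h v) v) has_derivative (\<lambda>d. gx \<theta> (h w) w \<bullet> (Jh w *v d) + gu \<theta> (h w) w \<bullet> d)) (at w)"
      by simp
    from has_derivative_unique[OF Phi_deriv[of \<theta> w] this]
    have eq: "gradPhi \<theta> w \<bullet> d = gx \<theta> (h w) w \<bullet> (Jh w *v d) + gu \<theta> (h w) w \<bullet> d" for d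
      by metis
    have tr: "gx \<theta> (h w) w \<bullet> (Jh w *v d) = (transpose (Jh w) *v gx \<theta> (h w) w) \<bullet> d" for d
      by (metis dot_lmul_matrix transpose_transpose vector_transpose_matrix)
    have "(gradPhi \<theta> w - Gmap Jh gx gu \<theta> (h w) w) \<bullet> d = 0" for d
      using eq[of d] tr[of d] by (simp add: Gmap_def inner_diff_left inner_add_left)
    from this[of "gradPhi \<theta> w - Gmap Jh gx gu \<theta> (h w) w"] show ?thesis by simp
  qed
  have G2: "inner (gradPhi \<theta> wa - gradPhi \<theta> wb) (wa - wb) \<ge> \<mu> * (norm (wa - wb))^2" for \<theta> wa wb
  proof -
    have a1: "phi \<theta> (h wb) wb \<ge> phi \<theta> (h wa) wa + gradPhi \<theta> wa \<bullet> (wb - wa) + (\<mu>/2) * (norm (wb - wa))^2"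
      by (rule Phi_strconv)
    have a2: "phi \<theta> (h wa) wa \<ge> phi \<theta> (h wb) wb + gradPhi \<theta> wb \<bullet> (wa - wb) + (\<mu>/2) * (norm (wa - wb))^2"
      by (rule Phi_strconv)
    have n: "norm (wb - wa) = norm (wa - wb)" by (rule norm_minus_commute)
    have i1: "gradPhi \<theta> wa \<bullet> (wb - wa) = - (gradPhi \<theta> wa \<bullet> (wa - wb))"
      by (simp add: inner_diff_right)
    have i2: "inner (gradPhi \<theta> wa - gradPhi \<theta> wb) (wa - wb) = gradPhi \<theta> wa \<bullet> (wa - wb) - gradPhi \<theta> wb \<bullet> (wa - wb)"
      by (simp add: inner_diff_left)
    show ?thesis using a1 a2 n i1 i2 by simp
  qed
  have G3: "gradPhi \<theta> (varphi \<theta>) = 0" for \<theta>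
  proof -
    have "(\<lambda>d. gradPhi \<theta> (varphi \<theta>) \<bullet> d) = (\<lambda>h. 0)"
      by (rule has_derivative_local_min[OF Phi_deriv]) (use varphi_argmin in auto)
    hence "gradPhi \<theta> (varphi \<theta>) \<bullet> gradPhi \<theta> (varphi \<theta>) = 0" by metis
    thus ?thesis by simp
  qed
  define rr where "rr = max (2*p - 1) (1 - xi1)"
  define ss where "ss = min (2*q - 1) (1 - xi2)"
  have rr: "0 < rr" "rr < 1" using p xi1 by (auto simp: rr_def)
  have ss: "ss > 1" using q xi2 by (auto simp: ss_def)
  have rs: "rr \<le> ss" using rr ss by simp
  define c0 where "c0 = K * (\<gamma> + ell)"
  define \<delta> where "\<delta> = \<mu> - c0"
  define \<Lambda> where "\<Lambda> = L + c0"
  have c0: "c0 > 0" using K_pos \<gamma>_pos ell_pos by (simp add: c0_def)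
  have \<delta>: "\<delta> > 0" using gain by (simp add: \<delta>_def c0_def add.commute)
  have \<Lambda>: "\<Lambda> > 0" using L_pos c0 by (simp add: \<Lambda>_def)
  define ca where "ca = \<delta> * \<Lambda> powr (-xi1)"
  define cb where "cb = \<delta> powr (1 - xi2)"
  have ca: "ca > 0" using \<delta> \<Lambda> by (simp add: ca_def)
  have cb: "cb > 0" using \<delta> by (simp add: cb_def)
  define \<kappa> where "\<kappa> = min (2*\<gamma>^2*ca / \<gamma> powr (2-xi1)) (2*\<gamma>^2*cb / \<gamma> powr (2-xi2))"
  have \<kappa>: "\<kappa> > 0" using ca cb \<gamma>_pos by (simp add: \<kappa>_def)
  define k where "k = min (a/2) (\<kappa>/2)"
  have k: "k > 0" using a_pos \<kappa> by (simp add: k_def)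
  define Cg where "Cg = MJ * max ell \<gamma>"
  have Cg: "Cg > 0" using MJ ell_pos by (simp add: Cg_def less_max_iff_disj)
  define mr where "mr = (1 - rr) * k / 4"
  define ms where "ms = (ss - 1) * k / 2"
  have mr: "mr > 0" using rr k by (simp add: mr_def)
  have ms: "ms > 0" using ss k by (simp add: ms_def)
  define c1 where "c1 = 1 + 1/\<gamma>"
  define c2 where "c2 = max 1 \<gamma>"
  have c1: "c1 > 0" using \<gamma>_pos by (simp add: c1_def add_pos_pos)
  have c2: "c2 > 0" by (simp add: c2_def less_max_iff_disj)
  define \<beta> where "\<beta> = (\<lambda>w t. c1 * bet mr ms rr ss (c2 * w) t)"
  define \<rho> where "\<rho> = (\<lambda>v. c1 * ((4 * Cg / k) * v) powr (1/rr))"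
  show ?thesis
  proof (intro exI[of _ \<beta>] exI[of _ \<rho>] conjI allI impI)
    show "classKL_FxT \<beta>" unfolding \<beta>_def by (rule beta_KL[OF mr ms rr ss c1 c2])
    show "classK \<rho>" unfolding \<rho>_def by (rule rho_K) (use c1 Cg k rr in auto)
  next
    fix x :: "real \<Rightarrow> real^'n" and u :: "real \<Rightarrow> real^'N" and th :: "real \<Rightarrow> real^'m"
    assume H: "th 0 \<in> Theta \<and>
       (\<forall>t\<ge>0. (x has_vector_derivative f (x t) (u t)) (at t within {0..})
              \<and> (u has_vector_derivative - phi_xi xi1 xi2 (Gmap Jh gx gu (th t) (x t) (u t))) (at t within {0..})
              \<and> (th has_vector_derivative eps0 *\<^sub>R Pi (th t)) (at t within {0..}))"
    have th0: "th 0 \<in> Theta" using H by blast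
    have dx: "(x has_vector_derivative f (x t) (u t)) (at t within {0..})" if "t \<ge> 0" for t
      using H that by blast
    have du: "(u has_vector_derivative - phi_xi xi1 xi2 (Gmap Jh gx gu (th t) (x t) (u t))) (at t within {0..})"
      if "t \<ge> 0" for t using H that by blast
    have dth: "(th has_vector_derivative eps0 *\<^sub>R Pi (th t)) (at t within {0..})" if "t \<ge> 0" for t
      using H that by blast
    have thT: "th t \<in> Theta" if "t \<ge> 0" for t
      using Theta_inv[of th] th0 dth that by blast
    define vb where "vb = (SUP s\<in>{0..}. norm (eps0 *\<^sub>R Pi (th s)))"
    have "compact ((\<lambda>\<theta>. norm (eps0 *\<^sub>R Pi \<theta>)) ` Theta)"
      using Theta_compact by (intro compact_continuous_image continuous_intros continuous_on_subset[OF Pi_cont]) auto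
    hence "bdd_above ((\<lambda>\<theta>. norm (eps0 *\<^sub>R Pi \<theta>)) ` Theta)"
      by (intro bounded_imp_bdd_above compact_imp_bounded)
    moreover have "(\<lambda>s. norm (eps0 *\<^sub>R Pi (th s))) ` {0..} \<subseteq> (\<lambda>\<theta>. norm (eps0 *\<^sub>R Pi \<theta>)) ` Theta"
      using thT by auto
    ultimately have bdd: "bdd_above ((\<lambda>s. norm (eps0 *\<^sub>R Pi (th s))) ` {0..})"
      by (rule bdd_above_mono)
    have vb: "norm (eps0 *\<^sub>R Pi (th t)) \<le> vb" if "t \<ge> 0" for t
      unfolding vb_def by (rule cSUP_upper[OF _ bdd]) (use that in auto)
    have vb0: "vb \<ge> 0" using vb[of 0] norm_ge_zero[of "eps0 *\<^sub>R Pi (th 0)"] by linarith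
    define uh where "uh t = varphi (th t)" for t
    define uh' where "uh' t = Jvarphi (th t) *v (eps0 *\<^sub>R Pi (th t))" for t
    define hh' where "hh' t = Jh (uh t) *v uh' t" for t
    define y where "y t = x t - h (uh t)" for t
    define e where "e t = u t - uh t" for t
    define G where "G t = Gmap Jh gx gu (th t) (x t) (u t)" for t
    have duh: "(uh has_vector_derivative uh' t) (at t within {0..})" if "t \<ge> 0" for t
      unfolding uh_def uh'_def by (rule vd_chain_matrix[OF dth[OF that] varphi_deriv])
    have dhh: "((\<lambda>s. h (uh s)) has_vector_derivative hh' t) (at t within {0..})" if "t \<ge> 0" for t
      unfolding hh'_def by (rule vd_chain_matrix[OF duh[OF that] h_deriv])
    have dy: "(y has_vector_derivative (f (x t) (u t) - hh' t)) (at t within {0..})" if "t \<ge> 0" for t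
      unfolding y_def by (rule has_vector_derivative_diff[OF dx[OF that] dhh[OF that]])
    have de: "(e has_vector_derivative (- phi_xi xi1 xi2 (G t) - uh' t)) (at t within {0..})" if "t \<ge> 0" for t
      unfolding e_def G_def by (rule has_vector_derivative_diff[OF du[OF that] duh[OF that]])
    define V1 where "V1 t = inner (y t) (y t)" for t
    define V2 where "V2 t = \<gamma>^2 * inner (e t) (e t)" for t
    define V1' where "V1' t = 2 * inner (y t) (f (x t) (u t) - hh' t)" for t
    define V2' where "V2' t = \<gamma>^2 * (2 * inner (e t) (- phi_xi xi1 xi2 (G t) - uh' t))" for t
    have dV1: "(V1 has_real_derivative V1' t) (at t within {0..})" if "t \<ge> 0" for t
      unfolding V1_def V1'_def by (rule deriv_inner_self[OF dy[OF that]])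
    have dV2: "(V2 has_real_derivative V2' t) (at t within {0..})" if "t \<ge> 0" for t
      unfolding V2_def V2'_def by (rule DERIV_cmult[OF deriv_inner_self[OF de[OF that]]])
    have cV1: "continuous_on {0..} V1"
      unfolding continuous_on_eq_continuous_within using dV1 by (auto intro: DERIV_continuous)
    have cV2: "continuous_on {0..} V2"
      unfolding continuous_on_eq_continuous_within using dV2 by (auto intro: DERIV_continuous)
    have nuh: "norm (uh' t) \<le> MJ * vb" if "t \<ge> 0" for t
    proof -
      have "norm (uh' t) \<le> MJ * norm (eps0 *\<^sub>R Pi (th t))" unfolding uh'_def by (rule MJb[OF thT[OF that]])
      also have "\<dots> \<le> MJ * vb" using vb[OF that] MJ by (intro mult_left_mono) auto
      finally show ?thesis .
    qed
    have nhh: "norm (hh' t) \<le> ell * (MJ * vb)" if "t \<ge> 0" for t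
    proof -
      have "norm (hh' t) \<le> ell * norm (uh' t)" unfolding hh'_def by (rule Jh_bd)
      also have "\<dots> \<le> ell * (MJ * vb)" using nuh[OF that] ell_pos by (intro mult_left_mono) auto
      finally show ?thesis .
    qed
    define P where "P = 2 * Cg * vb"
    have ineq1: "V1' t \<le> -k * (V1 t powr ((1+rr)/2) + V1 t powr ((1+ss)/2)) + P * V1 t powr (1/2)"
      if t: "t \<ge> 0" and act: "V1 t \<ge> V2 t" for t
    proof -
      have "(\<gamma> * norm (e t))^2 \<le> (norm (y t))^2"
        using act by (simp add: V1_def V2_def power2_norm_eq_inner power_mult_distrib)
      hence "\<gamma> * norm (e t) \<le> norm (y t)" by (rule power2_le_imp_le) simp
      hence "norm (x t - h (uh t)) \<ge> \<gamma> * norm (u t - uh t)" by (simp add: y_def e_def)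
      from A1[OF this] have A: "inner (y t) (f (x t) (u t)) \<le> -(a/2) * norm (y t) powr (2*p) - (a/2) * norm (y t) powr (2*q)"
        by (simp add: y_def)
      show ?thesis unfolding V1'_def V1_def
      proof (rule core1[OF A nhh[OF t]])
        show "k \<le> a/2" "k \<ge> 0" using k by (auto simp: k_def)
        show "2*p \<le> 1+rr" "rr \<le> ss" "1+ss \<le> 2*q" using rs by (auto simp: rr_def ss_def)
        show "2 * (ell * (MJ * vb)) \<le> P"
          unfolding P_def Cg_def using MJ vb0 by (auto intro!: mult_right_mono mult_left_mono)
      qed
    qed
    have ineq2: "V2' t \<le> -k * (V2 t powr ((1+rr)/2) + V2 t powr ((1+ss)/2)) + P * V2 t powr (1/2)"
      if t: "t \<ge> 0" and act: "V2 t \<ge> V1 t" and pos: "V2 t > 0" for t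
    proof -
      define B where "B = norm (e t)"
      have B: "B > 0" using pos by (auto simp: V2_def B_def)
      have yB: "norm (y t) \<le> \<gamma> * B"
      proof -
        have "(norm (y t))^2 \<le> (\<gamma> * B)^2"
          using act by (simp add: V1_def V2_def B_def power2_norm_eq_inner power_mult_distrib)
        thus ?thesis by (rule power2_le_imp_le) (use B \<gamma>_pos in simp)
      qed
      have uhv: "uh t = varphi (th t)" by (simp add: uh_def)
      define g0 where "g0 = gradPhi (th t) (u t)"
      have g0E: "inner g0 (e t) \<ge> \<mu> * B^2"
        using G2[where \<theta>="th t" and wa="u t" and wb="uh t"] G3[of "th t"] by (simp add: g0_def e_def B_def uhv)
      have g0n: "norm g0 \<le> L * B"
        using Phi_smooth[of "th t" "uh t" "u t"] G3[of "th t"] by (simp add: g0_def e_def B_def uhv norm_minus_commute)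
      have gg0: "norm (G t - g0) \<le> c0 * B"
      proof -
        have "norm (G t - g0) \<le> K * norm (x t - h (u t))"
          using A4[where \<theta>="th t" and x="h (u t)" and xh="x t" and u="u t"] by (simp add: G_def g0_def G1)
        also have "norm (x t - h (u t)) \<le> norm (y t) + norm (h (uh t) - h (u t))"
          using norm_triangle_ineq[of "y t" "h (uh t) - h (u t)"] by (simp add: y_def)
        also have "norm (h (uh t) - h (u t)) \<le> ell * B"
          using lipschitz_onD[OF h_lip, of "uh t" "u t"] by (simp add: dist_norm B_def e_def norm_minus_commute)
        finally have "norm (G t - g0) \<le> K * (norm (y t) + ell * B)" using K_pos by simp
        also have "\<dots> \<le> K * (\<gamma> * B + ell * B)" using yB K_pos by (intro mult_left_mono) auto
        finally show ?thesis by (simp add: c0_def algebra_simps)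
      qed
      have c2i: "V2' t \<le> -2*\<gamma>^2*(ca * B powr (2-xi1) + cb * B powr (2-xi2)) + 2*\<gamma>^2*(MJ * vb)*B"
        unfolding V2'_def ca_def cb_def
        by (rule core2[OF B B_def[symmetric] g0E g0n gg0 \<delta>_def \<delta> \<Lambda>_def xi1(1) xi2 nuh[OF t]])
      have V2B: "V2 t = \<gamma>^2 * B^2" by (simp add: V2_def B_def power2_norm_eq_inner)
      show ?thesis unfolding V2B
      proof (rule core2_conv[OF c2i])
        show "B \<ge> 0" "\<gamma> > 0" using B \<gamma>_pos by auto
        show "\<kappa> \<le> 2*\<gamma>^2*ca / \<gamma> powr (2-xi1)" "\<kappa> \<le> 2*\<gamma>^2*cb / \<gamma> powr (2-xi2)" by (auto simp: \<kappa>_def)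
        show "0 \<le> k" "k \<le> \<kappa>/2" using k by (auto simp: k_def)
        show "2-xi1 \<le> 1+rr" "rr \<le> ss" "1+ss \<le> 2-xi2" using rs by (auto simp: rr_def ss_def)
        show "2*\<gamma>*(MJ * vb) \<le> P"
          unfolding P_def Cg_def using MJ vb0 by (auto intro!: mult_right_mono mult_left_mono)
      qed
    qed
    define \<rho>0 where "\<rho>0 = ((4 * Cg / k) * vb) powr (1/rr)"
    have \<rho>0: "\<rho>0 \<ge> 0" by (simp add: \<rho>0_def)
    have \<rho>0r: "\<rho>0 powr rr = (4 * Cg / k) * vb"
    proof -
      have X: "(4 * Cg / k) * vb \<ge> 0" using Cg k vb0 by simp
      have "\<rho>0 powr rr = ((4 * Cg / k) * vb) powr (1/rr * rr)" by (simp add: \<rho>0_def powr_powr)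
      also have "1/rr * rr = 1" using rr by simp
      finally show ?thesis using X by (simp only: powr_one_gt_zero_iff powr_one)
    qed
    define Vm where "Vm t = max (V1 t) (V2 t)" for t
    have Wb: "sqrt (Vm t) \<le> max \<rho>0 (bet mr ms rr ss (sqrt (Vm 0)) t)" if t: "t \<ge> 0" for t
    proof (rule field_le_epsilon)
      fix \<epsilon> :: real assume \<epsilon>: "\<epsilon> > 0"
      define rho where "rho = \<rho>0 + \<epsilon>"
      have rho: "rho > 0" using \<rho>0 \<epsilon> by (simp add: rho_def)
      have Pr: "P \<le> (k/2) * rho powr rr"
      proof -
        have "\<rho>0 powr rr \<le> rho powr rr" using \<rho>0 rr \<epsilon> by (intro powr_mono2) (auto simp: rho_def)
        hence "(k/2) * \<rho>0 powr rr \<le> (k/2) * rho powr rr" using k by (intro mult_left_mono) auto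
        moreover have "(k/2) * \<rho>0 powr rr = P" using k by (simp add: \<rho>0r P_def)
        ultimately show ?thesis by simp
      qed
      have "sqrt (max (V1 t) (V2 t)) \<le> max rho (bet ((1-rr)*k/4) ((ss-1)*k/2) rr ss (sqrt (max (V1 0) (V2 0))) t)"
      proof (rule scalar_iss[OF cV1 cV2 dV1 dV2 k rr ss rho Pr _ _ t])
        fix \<tau> :: real assume "\<tau> \<ge> 0" "V2 \<tau> \<le> V1 \<tau>"
        thus "V1' \<tau> \<le> - k * (V1 \<tau> powr ((1 + rr) / 2) + V1 \<tau> powr ((1 + ss) / 2)) + P * V1 \<tau> powr (1 / 2)"
          by (rule ineq1)
      next
        fix \<tau> :: real assume a: "\<tau> \<ge> 0" "V1 \<tau> \<le> V2 \<tau>" "rho^2 \<le> V2 \<tau>"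
        have "rho^2 > 0" using rho by simp
        hence "V2 \<tau> > 0" using a(3) by linarith
        thus "V2' \<tau> \<le> - k * (V2 \<tau> powr ((1 + rr) / 2) + V2 \<tau> powr ((1 + ss) / 2)) + P * V2 \<tau> powr (1 / 2)"
          using ineq2 a by blast
      qed
      hence "sqrt (Vm t) \<le> max rho (bet mr ms rr ss (sqrt (Vm 0)) t)"
        by (simp add: Vm_def mr_def ms_def)
      also have "\<dots> \<le> max \<rho>0 (bet mr ms rr ss (sqrt (Vm 0)) t) + \<epsilon>"
        using \<epsilon> by (simp add: rho_def)
      finally show "sqrt (Vm t) \<le> max \<rho>0 (bet mr ms rr ss (sqrt (Vm 0)) t) + \<epsilon>" .
    qed
    have final: "\<forall>t\<ge>0. norm (x t - h (varphi (th t)), u t - varphi (th t))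
             \<le> \<beta> (norm (x 0 - h (varphi (th 0)), u 0 - varphi (th 0))) t
                + \<rho> (SUP s\<in>{0..}. norm (eps0 *\<^sub>R Pi (th s)))"
    proof (intro allI impI)
      fix t :: real assume t: "t \<ge> 0"
      define N0 where "N0 = norm (y 0, e 0)"
      have N0: "N0 \<ge> 0" by (simp add: N0_def)
      have eqN: "norm (x t - h (varphi (th t)), u t - varphi (th t)) = norm (y t, e t)"
        by (simp add: y_def e_def uh_def)
      have eqN0: "norm (x 0 - h (varphi (th 0)), u 0 - varphi (th 0)) = N0"
        by (simp add: y_def e_def uh_def N0_def)
      have sV1: "sqrt (V1 \<tau>) = norm (y \<tau>)" for \<tau> by (simp add: V1_def norm_eq_sqrt_inner)
      have sV2: "sqrt (V2 \<tau>) = \<gamma> * norm (e \<tau>)" for \<tau>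
        using \<gamma>_pos by (simp add: V2_def norm_eq_sqrt_inner real_sqrt_mult)
      have nyt: "norm (y t) \<le> sqrt (Vm t)" unfolding sV1[symmetric] Vm_def by (rule real_sqrt_le_mono) simp
      have net: "\<gamma> * norm (e t) \<le> sqrt (Vm t)" unfolding sV2[symmetric] Vm_def by (rule real_sqrt_le_mono) simp
      have net': "norm (e t) \<le> sqrt (Vm t) / \<gamma>" using net \<gamma>_pos by (simp add: field_simps)
      have "norm (y t, e t) \<le> norm (y t) + norm (e t)" by (rule norm_Pair_le)
      also have "\<dots> \<le> sqrt (Vm t) + sqrt (Vm t) / \<gamma>" using nyt net' by linarith
      also have "\<dots> = c1 * sqrt (Vm t)" by (simp add: c1_def algebra_simps)
      finally have A: "norm (y t, e t) \<le> c1 * sqrt (Vm t)" .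
      have W0: "sqrt (Vm 0) \<le> c2 * N0"
      proof -
        have c2a: "1 \<le> c2" "\<gamma> \<le> c2" by (auto simp: c2_def)
        have "norm (y 0) \<le> N0" using norm_fst_le[of "y 0" "e 0"] by (simp add: N0_def)
        also have "N0 \<le> c2 * N0" using c2a N0 by (simp add: mult_le_cancel_right1)
        finally have y0: "norm (y 0) \<le> c2 * N0" .
        have "norm (e 0) \<le> N0" using norm_snd_le[of "e 0" "y 0"] by (simp add: N0_def)
        hence "\<gamma> * norm (e 0) \<le> \<gamma> * N0" using \<gamma>_pos by (intro mult_left_mono) auto
        also have "\<gamma> * N0 \<le> c2 * N0" using c2a N0 by (intro mult_right_mono) auto
        finally have e0: "\<gamma> * norm (e 0) \<le> c2 * N0" .
        note y0 e0
        hence "sqrt (V1 0) \<le> c2 * N0" "sqrt (V2 0) \<le> c2 * N0" using sV1 sV2 by auto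
        moreover have "Vm 0 = V1 0 \<or> Vm 0 = V2 0" by (simp add: Vm_def max_def)
        ultimately show ?thesis by auto
      qed
      have B: "bet mr ms rr ss (sqrt (Vm 0)) t \<le> bet mr ms rr ss (c2 * N0) t"
      proof (rule bet_mono_w[OF _ W0])
        have "V1 0 \<ge> 0" by (simp add: V1_def)
        hence "Vm 0 \<ge> 0" by (simp add: Vm_def le_max_iff_disj)
        thus "0 \<le> sqrt (Vm 0)" by simp
      qed (use ms ss t rr in auto)
      have "c1 * sqrt (Vm t) \<le> c1 * max \<rho>0 (bet mr ms rr ss (sqrt (Vm 0)) t)"
        using Wb[OF t] c1 by (intro mult_left_mono) auto
      also have "\<dots> \<le> c1 * (bet mr ms rr ss (c2 * N0) t + \<rho>0)"
        using B \<rho>0 c1 bet_nonneg[of mr ms rr ss "sqrt (Vm 0)" t] by (intro mult_left_mono) auto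
      also have "\<dots> = \<beta> N0 t + \<rho> vb" unfolding \<beta>_def \<rho>_def \<rho>0_def by (simp only: distrib_left)
      finally show "norm (x t - h (varphi (th t)), u t - varphi (th t))
             \<le> \<beta> (norm (x 0 - h (varphi (th 0)), u 0 - varphi (th 0))) t
                + \<rho> (SUP s\<in>{0..}. norm (eps0 *\<^sub>R Pi (th s)))"
        using A eqN eqN0 by (simp add: vb_def)
    qed
    fix t :: real assume "t \<ge> 0"
    thus "norm (x t - h (varphi (th t)), u t - varphi (th t))
             \<le> \<beta> (norm (x 0 - h (varphi (th 0)), u 0 - varphi (th 0))) t
                + \<rho> (SUP s\<in>{0..}. norm (eps0 *\<^sub>R Pi (th s)))"
      using final by blast
  qed
qed

end
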